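(* Let $n\ge 3$, $k\ge 1$, and let $T_1,\dots,T_k$ be independent uniformly random spanning trees of the complete graph $K_n$. For an edge $e$ of $K_n$ let $X_e^{T_i}$ be the indicator of $e\in E(T_i)$ and \[R_e=\sum_{i=1}^k X_e^{T_i}-\max\left(X_e^{T_1},\dots,X_e^{T_k}\right).\] Let $e\ne e'$ be edges of $K_n$. Then \begin{itemize} \item if $e$ and $e'$ share no endpoint, $\mathrm{Cov}(R_e,R_{e'})=0$; \item if $e$ and $e'$ share an endpoint, \[\mathrm{Cov}(R_e,R_{e'})=-\frac{k}{n^2}+\frac{2k}{n^2}\left(1-\frac{2}{n}\right)^{k-1}+\left(1-\frac{4}{n}+\frac{3}{n^2}\right)^k-\left(1-\frac{2}{n}\right)^{2k}.\] \end{itemize}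
   Context: Uniform random spanning tree: chosen from the uniform distribution on the $n^{n-2}$ labeled spanning trees of $K_n$ on vertex set $[n]$. $R_e$ is the number of repeated (surplus) occurrences of $e$ among the trees. *)

theory Defs
  imports "HOL-Probability.Probability"
begin

definition Kn_edges :: "nat \<Rightarrow> nat set set" where
  "Kn_edges n = {{u, v} | u v. u \<in> {1..n} \<and> v \<in> {1..n} \<and> u \<noteq> v}"

definition adj :: "nat set set \<Rightarrow> (nat \<times> nat) set" where
  "adj T = {(x, y). {x, y} \<in> T \<and> x \<noteq> y}"

definition connected_by :: "nat set set \<Rightarrow> nat \<Rightarrow> nat \<Rightarrow> bool" where
  "connected_by T u v \<longleftrightarrow> (u, v) \<in> (adj T)\<^sup>*"

text \<open>A spanning tree of K_n: a connected, acyclic spanning subgraph.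
  Acyclic is expressed as: no edge lies on a cycle, i.e. removing any edge
  disconnects its two endpoints.\<close>
definition is_spanning_tree :: "nat \<Rightarrow> nat set set \<Rightarrow> bool" where
  "is_spanning_tree n T \<longleftrightarrow>
     T \<subseteq> Kn_edges n \<and>
     (\<forall>u\<in>{1..n}. \<forall>v\<in>{1..n}. connected_by T u v) \<and>
     (\<forall>e\<in>T. \<forall>u v. e = {u, v} \<longrightarrow> \<not> connected_by (T - {e}) u v)"

definition spanning_trees :: "nat \<Rightarrow> nat set set set" where
  "spanning_trees n = {T. is_spanning_tree n T}"

text \<open>k independent uniform spanning trees = uniform k-tuple of spanning trees.\<close>
definition tree_tuples :: "nat \<Rightarrow> nat \<Rightarrow> nat set set list set" where
  "tree_tuples n k = {ts. length ts = k \<and> set ts \<subseteq> spanning_trees n}"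

definition tree_tuple_pmf :: "nat \<Rightarrow> nat \<Rightarrow> nat set set list pmf" where
  "tree_tuple_pmf n k = pmf_of_set (tree_tuples n k)"

definition X_ind :: "nat set \<Rightarrow> nat set set \<Rightarrow> real" where
  "X_ind e T = (if e \<in> T then 1 else 0)"

definition R_rep :: "nat \<Rightarrow> nat set \<Rightarrow> nat set set list \<Rightarrow> real" where
  "R_rep k e ts = (\<Sum>i<k. X_ind e (ts ! i)) - (MAX i\<in>{..<k}. X_ind e (ts ! i))"

definition covariance_pmf :: "'a pmf \<Rightarrow> ('a \<Rightarrow> real) \<Rightarrow> ('a \<Rightarrow> real) \<Rightarrow> real" where
  "covariance_pmf p X Y =
     measure_pmf.expectation p (\<lambda>x. X x * Y x)
     - measure_pmf.expectation p X * measure_pmf.expectation p Y"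

end

theory Submission
  imports Defs
begin


definition forests :: "nat set \<Rightarrow> nat set \<Rightarrow> (nat \<Rightarrow> nat) set" where
  "forests V R = {f. (\<forall>x\<in>V-R. f x \<in> V) \<and> (\<forall>x. x \<notin> V-R \<longrightarrow> f x = x) \<and> (\<forall>x\<in>V. \<exists>k. (f^^k) x \<in> R)}"

definition funs :: "nat set \<Rightarrow> nat set \<Rightarrow> (nat \<Rightarrow> nat) set" where
  "funs A B = {f. (\<forall>x\<in>A. f x \<in> B) \<and> (\<forall>x. x \<notin> A \<longrightarrow> f x = x)}"


lemma funs_bij: "bij_betw (\<lambda>f. restrict f A) (funs A B) (PiE A (\<lambda>_. B))"
proof (rule bij_betw_byWitness[where f'="\<lambda>g x. if x \<in> A then g x else x"])
  show "\<forall>a\<in>funs A B. (\<lambda>x. if x \<in> A then restrict a A x else x) = a"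
    by (auto simp: funs_def fun_eq_iff)
  show "\<forall>a'\<in>A \<rightarrow>\<^sub>E B. restrict (\<lambda>x. if x \<in> A then a' x else x) A = a'"
    by (auto simp: fun_eq_iff PiE_def extensional_def)
  show "(\<lambda>f. restrict f A) ` funs A B \<subseteq> A \<rightarrow>\<^sub>E B"
    by (auto simp: funs_def)
  show "(\<lambda>g x. if x \<in> A then g x else x) ` (A \<rightarrow>\<^sub>E B) \<subseteq> funs A B"
    by (auto simp: funs_def)
qed

lemma funs_finite: "finite A \<Longrightarrow> finite B \<Longrightarrow> finite (funs A B)"
  by (simp add: bij_betw_finite[OF funs_bij[of A B]] finite_PiE)

lemma funs_card: "finite A \<Longrightarrow> card (funs A B) = card B ^ card A"
  using bij_betw_same_card[OF funs_bij[of A B]] by (simp add: card_PiE)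

lemma forests_sub: "forests V R \<subseteq> funs (V-R) V"
  by (auto simp: forests_def funs_def)

lemma forests_finite: "finite V \<Longrightarrow> finite (forests V R)"
  by (rule finite_subset[OF forests_sub funs_finite]) auto

lemma card_fibres:
  assumes "finite A" "finite B" "h ` A \<subseteq> B"
  shows "card A = (\<Sum>y\<in>B. card {x\<in>A. h x = y})"
  using sum.group[OF assms, of "\<lambda>_. 1::nat"] by simp

lemma binom_ident:
  fixes m k :: nat assumes "m \<ge> 1"
  shows "(\<Sum>j\<le>m. (m choose j) * (j * k ^ j * m ^ (m - j))) = m * k * (k + m) ^ (m - 1)"
proof -
  obtain m' where m: "m = Suc m'" using assms by (cases m) auto
  have "(\<Sum>j\<le>m. (m choose j) * (j * k ^ j * m ^ (m - j)))
      = (\<Sum>j\<le>m'. (m choose Suc j) * (Suc j * k ^ Suc j * m ^ (m - Suc j)))"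
    unfolding m by (subst sum.atMost_Suc_shift) simp
  also have "\<dots> = (\<Sum>j\<le>m'. m * k * ((m' choose j) * k ^ j * m ^ (m' - j)))"
  proof (rule sum.cong[OF refl])
    fix j assume "j \<in> {..m'}"
    have "(m choose Suc j) * Suc j = m * (m' choose j)"
      unfolding m using Suc_times_binomial_eq[of m' j] by (simp add: mult.commute)
    then show "(m choose Suc j) * (Suc j * k ^ Suc j * m ^ (m - Suc j)) = m * k * ((m' choose j) * k ^ j * m ^ (m' - j))"
    proof -
      have "(m choose Suc j) * (Suc j * k ^ Suc j * m ^ (m - Suc j)) = ((m choose Suc j) * Suc j) * k * (k ^ j * m ^ (m' - j))"
        using m by (simp only: power_Suc ac_simps diff_Suc_Suc)
      also have "\<dots> = m * k * ((m' choose j) * k ^ j * m ^ (m' - j))"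
        unfolding \<open>(m choose Suc j) * Suc j = m * (m' choose j)\<close> by (simp add: ac_simps)
      finally show ?thesis .
    qed
  qed
  also have "\<dots> = m * k * (k + m) ^ m'"
    using binomial_ring[of k m m'] by (simp add: sum_distrib_left)
  finally show ?thesis using m by simp
qed

lemma forestsD:
  assumes "f \<in> forests V R"
  shows "\<And>x. x \<in> V-R \<Longrightarrow> f x \<in> V" "\<And>x. x \<notin> V-R \<Longrightarrow> f x = x"
    "\<And>x. x \<in> V \<Longrightarrow> \<exists>k. (f^^k) x \<in> R"
  using assms by (auto simp: forests_def)

lemma h_in:
  assumes f: "f \<in> forests V R" and S: "S = {x\<in>V-R. f x \<in> R}"
  shows "(\<lambda>x. if x \<in> (V-R)-S then f x else x) \<in> forests (V-R) S"
proof -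
  define h where "h = (\<lambda>x. if x \<in> (V-R)-S then f x else x)"
  have reach: "x \<in> V-R \<Longrightarrow> (f^^k) x \<in> R \<Longrightarrow> \<exists>j. (h^^j) x \<in> S" for k x
  proof (induction k arbitrary: x)
    case 0 then show ?case by simp
  next
    case (Suc k)
    show ?case
    proof (cases "x \<in> S")
      case True then show ?thesis by (metis funpow_0)
    next
      case False
      have fx: "f x \<in> V-R" using Suc.prems False S forestsD(1)[OF f] by auto
      have "(f^^k) (f x) \<in> R" using Suc.prems(2) by (simp add: funpow_Suc_right del: funpow.simps)
      then obtain j where "(h^^j) (f x) \<in> S" using Suc.IH fx by blast
      moreover have "h x = f x" using False Suc.prems unfolding h_def by auto
      ultimately have "(h^^Suc j) x \<in> S" by (simp add: funpow_Suc_right del: funpow.simps)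
      then show ?thesis by blast
    qed
  qed
  have "x \<in> V-R \<Longrightarrow> \<exists>j. (h^^j) x \<in> S" for x
    using forestsD(3)[OF f, of x] reach by auto
  moreover have "x \<in> (V-R)-S \<Longrightarrow> h x \<in> V-R" for x
    using forestsD(1)[OF f, of x] S unfolding h_def by auto
  ultimately show ?thesis unfolding forests_def h_def[symmetric] by (auto simp: h_def)
qed

lemma merge_in:
  assumes S: "S \<subseteq> V-R" and g: "g \<in> funs S R" and h: "h \<in> forests (V-R) S" and R: "R \<subseteq> V"
  shows "(\<lambda>x. if x \<in> S then g x else h x) \<in> forests V R"
proof -
  define f where "f = (\<lambda>x. if x \<in> S then g x else h x)"
  have reach: "x \<in> V-R \<Longrightarrow> (h^^k) x \<in> S \<Longrightarrow> \<exists>j. (f^^j) x \<in> R" for k x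
  proof (induction k arbitrary: x)
    case 0
    then have "(f^^1) x \<in> R" using g unfolding f_def funs_def by auto
    then show ?case by blast
  next
    case (Suc k)
    show ?case
    proof (cases "x \<in> S")
      case True
      then have "(f^^1) x \<in> R" using g unfolding f_def funs_def by auto
      then show ?thesis by blast
    next
      case False
      have hx: "h x \<in> V-R" using Suc.prems False forestsD(1)[OF h] by auto
      have "(h^^k) (h x) \<in> S" using Suc.prems(2) by (simp add: funpow_Suc_right del: funpow.simps)
      then obtain j where "(f^^j) (h x) \<in> R" using Suc.IH hx by blast
      moreover have "f x = h x" using False unfolding f_def by auto
      ultimately have "(f^^Suc j) x \<in> R" by (simp add: funpow_Suc_right del: funpow.simps)
      then show ?thesis by blast
    qed
  qed
  have "x \<in> V \<Longrightarrow> \<exists>j. (f^^j) x \<in> R" for x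
  proof (cases "x \<in> R")
    case True then show ?thesis by (metis funpow_0)
  next
    case False
    assume "x \<in> V"
    then show ?thesis using reach[of x] forestsD(3)[OF h, of x] False by auto
  qed
  moreover have "x \<in> V-R \<Longrightarrow> f x \<in> V" for x
    using g forestsD(1)[OF h, of x] S R unfolding f_def funs_def by auto
  moreover have "x \<notin> V-R \<Longrightarrow> f x = x" for x
    using forestsD(2)[OF h, of x] S unfolding f_def by auto
  ultimately show ?thesis unfolding forests_def f_def[symmetric] by auto
qed

lemma fibre_bij:
  assumes S: "S \<subseteq> V-R" and R: "R \<subseteq> V"
  shows "bij_betw (\<lambda>f. ((\<lambda>x. if x \<in> S then f x else x), (\<lambda>x. if x \<in> (V-R)-S then f x else x)))
     {f \<in> forests V R. {x\<in>V-R. f x \<in> R} = S} (funs S R \<times> forests (V-R) S)"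
proof (rule bij_betw_byWitness[where f'="\<lambda>p x. if x \<in> S then fst p x else snd p x"])
  show "\<forall>a\<in>{f \<in> forests V R. {x \<in> V - R. f x \<in> R} = S}.
       (\<lambda>p x. if x \<in> S then fst p x else snd p x)
        (\<lambda>x. if x \<in> S then a x else x, \<lambda>x. if x \<in> V - R - S then a x else x) = a"
  proof
    fix a assume a: "a \<in> {f \<in> forests V R. {x \<in> V - R. f x \<in> R} = S}"
    show "(\<lambda>p x. if x \<in> S then fst p x else snd p x)
        (\<lambda>x. if x \<in> S then a x else x, \<lambda>x. if x \<in> V - R - S then a x else x) = a"
    proof
      fix x show "(\<lambda>p x. if x \<in> S then fst p x else snd p x)
        (\<lambda>x. if x \<in> S then a x else x, \<lambda>x. if x \<in> V - R - S then a x else x) x = a x"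
        using a forestsD(2)[of a V R x] S by auto
    qed
  qed
  show "\<forall>a'\<in>funs S R \<times> forests (V - R) S.
       (\<lambda>f. (\<lambda>x. if x \<in> S then f x else x, \<lambda>x. if x \<in> V - R - S then f x else x))
        ((\<lambda>p x. if x \<in> S then fst p x else snd p x) a') = a'"
  proof
    fix a' assume a': "a' \<in> funs S R \<times> forests (V - R) S"
    obtain g h where gh: "a' = (g, h)" by (cases a')
    have g: "g \<in> funs S R" and h: "h \<in> forests (V-R) S" using a' gh by auto
    have 1: "(\<lambda>x. if x \<in> S then (if x \<in> S then g x else h x) else x) = g"
      using g by (auto simp: funs_def fun_eq_iff)
    have 2: "(\<lambda>x. if x \<in> V - R - S then (if x \<in> S then g x else h x) else x) = h"
    proof
      fix x show "(if x \<in> V - R - S then (if x \<in> S then g x else h x) else x) = h x"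
        using forestsD(2)[OF h, of x] by auto
    qed
    show "(\<lambda>f. (\<lambda>x. if x \<in> S then f x else x, \<lambda>x. if x \<in> V - R - S then f x else x))
        ((\<lambda>p x. if x \<in> S then fst p x else snd p x) a') = a'"
      unfolding gh fst_conv snd_conv by (simp only: 1 2)
  qed
  show "(\<lambda>f. (\<lambda>x. if x \<in> S then f x else x, \<lambda>x. if x \<in> V - R - S then f x else x)) `
    {f \<in> forests V R. {x \<in> V - R. f x \<in> R} = S} \<subseteq> funs S R \<times> forests (V - R) S"
  proof
    fix y assume "y \<in> (\<lambda>f. (\<lambda>x. if x \<in> S then f x else x, \<lambda>x. if x \<in> V - R - S then f x else x)) `
       {f \<in> forests V R. {x \<in> V - R. f x \<in> R} = S}"
    then obtain f where f: "f \<in> forests V R" and S': "S = {x \<in> V - R. f x \<in> R}"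
      and y: "y = (\<lambda>x. if x \<in> S then f x else x, \<lambda>x. if x \<in> V - R - S then f x else x)" by auto
    have "(\<lambda>x. if x \<in> S then f x else x) \<in> funs S R"
      using S' by (auto simp: funs_def)
    moreover have "(\<lambda>x. if x \<in> V - R - S then f x else x) \<in> forests (V - R) S"
      using h_in[OF f S'] .
    ultimately show "y \<in> funs S R \<times> forests (V - R) S" using y by simp
  qed
  show "(\<lambda>p x. if x \<in> S then fst p x else snd p x) ` (funs S R \<times> forests (V - R) S)
    \<subseteq> {f \<in> forests V R. {x \<in> V - R. f x \<in> R} = S}"
  proof
    fix y assume "y \<in> (\<lambda>p x. if x \<in> S then fst p x else snd p x) ` (funs S R \<times> forests (V - R) S)"
    then obtain p where p: "p \<in> funs S R \<times> forests (V - R) S"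
      and y0: "y = (\<lambda>x. if x \<in> S then fst p x else snd p x)" by blast
    define g h where "g = fst p" and "h = snd p"
    have g: "g \<in> funs S R" and h: "h \<in> forests (V - R) S" using p unfolding g_def h_def by auto
    have y: "y = (\<lambda>x. if x \<in> S then g x else h x)" using y0 unfolding g_def h_def .
    have "y \<in> forests V R" using merge_in[OF S g h R] y by simp
    moreover have "{x \<in> V - R. y x \<in> R} = S"
    proof (intro set_eqI iffI)
      fix x assume "x \<in> {x \<in> V - R. y x \<in> R}"
      then show "x \<in> S" using forestsD(1)[OF h, of x] y by (auto split: if_splits)
    next
      fix x assume "x \<in> S" then show "x \<in> {x \<in> V - R. y x \<in> R}"
        using S g y by (auto simp: funs_def)
    qed
    ultimately show "y \<in> {f \<in> forests V R. {x \<in> V - R. f x \<in> R} = S}" by simp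
  qed
qed


lemma sum_pow_card:
  fixes g :: "nat \<Rightarrow> nat" assumes W: "finite W"
  shows "(\<Sum>S\<in>Pow W. g (card S)) = (\<Sum>j\<le>card W. (card W choose j) * g j)"
proof -
  have fin: "finite (Pow W)" using W by simp
  have img: "card ` Pow W \<subseteq> {..card W}" using W by (auto intro: card_mono)
  have "(\<Sum>S\<in>Pow W. g (card S)) = (\<Sum>j\<le>card W. \<Sum>S\<in>{S\<in>Pow W. card S = j}. g (card S))"
    using sum.group[OF fin finite_atMost img, of "\<lambda>S. g (card S)"] by simp
  also have "\<dots> = (\<Sum>j\<le>card W. (card W choose j) * g j)"
  proof (rule sum.cong[OF refl])
    fix j
    have "(\<Sum>S\<in>{S\<in>Pow W. card S = j}. g (card S)) = (\<Sum>S\<in>{S\<in>Pow W. card S = j}. g j)" by simp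
    also have "\<dots> = card {S\<in>Pow W. card S = j} * g j" by simp
    also have "{S\<in>Pow W. card S = j} = {B. B \<subseteq> W \<and> card B = j}" by auto
    finally show "(\<Sum>S\<in>{S\<in>Pow W. card S = j}. g (card S)) = (card W choose j) * g j"
      using n_subsets[OF W, of j] by simp
  qed
  finally show ?thesis .
qed

lemma forests_base:
  assumes "V - R = {}"
  shows "forests V R = {id::nat\<Rightarrow>nat}"
proof (intro set_eqI iffI)
  fix f assume "f \<in> forests V R"
  then have "f x = x" for x using forestsD(2)[of f V R x] assms by auto
  then show "f \<in> {id}" by (auto simp: fun_eq_iff)
next
  fix f :: "nat \<Rightarrow> nat" assume "f \<in> {id}"
  then show "f \<in> forests V R" using assms unfolding forests_def
    by (auto intro!: exI[of _ 0])
qed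

lemma S_nonempty:
  assumes f: "f \<in> forests V R" and ne: "V - R \<noteq> {}"
  shows "{x\<in>V-R. f x \<in> R} \<noteq> {}"
proof -
  obtain x where x: "x \<in> V - R" using ne by blast
  have "(\<lambda>x. if x \<in> (V-R)-{x\<in>V-R. f x \<in> R} then f x else x) \<in> forests (V-R) {x\<in>V-R. f x \<in> R}"
    using h_in[OF f refl] .
  from forestsD(3)[OF this x] show ?thesis by auto
qed

theorem forests_card:
  assumes "finite V" "R \<subseteq> V" "R \<noteq> {}"
  shows "card (forests V R) * card V = card R * card V ^ card (V - R)"
  using assms
proof (induction "card (V - R)" arbitrary: V R rule: less_induct)
  case less
  show ?case
  proof (cases "V - R = {}")
    case True
    then have "V = R" using less.prems by auto
    then show ?thesis using forests_base[OF True] by simp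
  next
    case False
    define W where "W = V - R"
    define m where "m = card W"
    define k where "k = card R"
    have W: "finite W" using less.prems W_def by auto
    have m0: "m \<ge> 1" using False W unfolding m_def W_def by (simp add: Suc_leI card_gt_0_iff)
    have finR: "finite R" using less.prems finite_subset by blast
    have "card (V - R) = card V - card R" using card_Diff_subset[OF finR less.prems(2)] .
    moreover have "card R \<le> card V" using card_mono less.prems by blast
    ultimately have nmk: "card V = m + k" unfolding m_def k_def W_def by simp
    define P where "P = Pow W - {{}}"
    have finF: "finite (forests V R)" using forests_finite less.prems by blast
    have img: "(\<lambda>f. {x\<in>V-R. f x \<in> R}) ` forests V R \<subseteq> P"
      using S_nonempty False unfolding P_def W_def by auto
    have "card (forests V R) = (\<Sum>S\<in>P. card {f\<in>forests V R. {x\<in>V-R. f x \<in> R} = S})"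
      using card_fibres[OF finF _ img] W unfolding P_def by simp
    also have "\<dots> = (\<Sum>S\<in>P. k ^ card S * card (forests W S))"
    proof (rule sum.cong[OF refl])
      fix S assume S: "S \<in> P"
      have "card {f\<in>forests V R. {x\<in>V-R. f x \<in> R} = S} = card (funs S R \<times> forests (V-R) S)"
        using bij_betw_same_card[OF fibre_bij[of S V R]] S less.prems unfolding P_def W_def by auto
      also have "\<dots> = k ^ card S * card (forests W S)"
        using funs_card[of S R] S W finite_subset unfolding card_cartesian_product k_def P_def W_def
        by auto
      finally show "card {f\<in>forests V R. {x\<in>V-R. f x \<in> R} = S} = k ^ card S * card (forests W S)" .
    qed
    finally have c1: "card (forests V R) = (\<Sum>S\<in>P. k ^ card S * card (forests W S))" .
    have "card (forests V R) * m = (\<Sum>S\<in>P. k ^ card S * (card (forests W S) * m))"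
      unfolding c1 sum_distrib_right by (simp add: ac_simps)
    also have "\<dots> = (\<Sum>S\<in>P. k ^ card S * card S * m ^ (m - card S))"
    proof (rule sum.cong[OF refl])
      fix S assume S: "S \<in> P"
      have SW: "S \<subseteq> W" "S \<noteq> {}" using S unfolding P_def by auto
      have lt: "card (W - S) < card (V - R)"
      proof -
        have "W - S \<subset> W" using SW by blast
        then show ?thesis using psubset_card_mono[OF W] unfolding W_def by blast
      qed
      have "card (forests W S) * card W = card S * card W ^ card (W - S)"
        using less.hyps[OF lt] W SW by blast
      moreover have "card (W - S) = m - card S" unfolding m_def using SW W
        by (simp add: card_Diff_subset finite_subset)
      ultimately show "k ^ card S * (card (forests W S) * m) = k ^ card S * card S * m ^ (m - card S)"
        unfolding m_def by simp
    qed
    also have "\<dots> = (\<Sum>S\<in>Pow W. k ^ card S * card S * m ^ (m - card S))"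
      unfolding P_def using W by (intro sum.mono_neutral_left) auto
    also have "\<dots> = (\<Sum>j\<le>m. (m choose j) * (k ^ j * j * m ^ (m - j)))"
      using sum_pow_card[OF W, of "\<lambda>j. k ^ j * j * m ^ (m - j)"] unfolding m_def by simp
    also have "\<dots> = m * k * (k + m) ^ (m - 1)"
      using binom_ident[OF m0, of k] by (simp add: ac_simps)
    finally have "card (forests V R) * m = m * k * (k + m) ^ (m - 1)" .
    then have "card (forests V R) = k * (k + m) ^ (m - 1)" using m0 by simp
    then have "card (forests V R) * card V = k * (k + m) ^ (m - 1) * (k + m)" using nmk by simp
    also have "\<dots> = k * (k + m) ^ m"
    proof -
      have "m = Suc (m - 1)" using m0 by simp
      then have "(k + m) ^ m = (k + m) ^ (m - 1) * (k + m)" by (metis power_Suc2)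
      then show ?thesis by simp
    qed
    finally show ?thesis unfolding k_def m_def W_def nmk
      by (simp add: add.commute m_def W_def)
  qed
qed


lemma reach_transfer:
  assumes h1: "\<And>z. z \<in> R' \<Longrightarrow> \<exists>j. (g^^j) z \<in> T"
    and h2: "\<And>z. z \<in> V \<Longrightarrow> (\<exists>j. (g^^j) z \<in> T) \<or> (g z = f z \<and> f z \<in> V)"
  shows "y \<in> V \<Longrightarrow> (f^^k) y \<in> R' \<Longrightarrow> \<exists>j. (g^^j) y \<in> T"
proof (induction k arbitrary: y)
  case 0 then show ?case using h1 by simp
next
  case (Suc k)
  show ?case
  proof (cases "\<exists>j. (g^^j) y \<in> T")
    case True then show ?thesis .
  next
    case False
    then have gy: "g y = f y" "f y \<in> V" using h2[OF Suc.prems(1)] by auto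
    have "(f^^k) (f y) \<in> R'" using Suc.prems(2) by (simp add: funpow_Suc_right del: funpow.simps)
    then obtain j where "(g^^j) (f y) \<in> T" using Suc.IH gy by blast
    then have "(g^^Suc j) y \<in> T" using gy by (simp add: funpow_Suc_right del: funpow.simps)
    then show ?thesis by blast
  qed
qed

lemma no_fix:
  assumes f: "f \<in> forests V R" and x: "x \<in> V - R"
  shows "f x \<noteq> x"
proof
  assume fx: "f x = x"
  have "(f^^k) x = x" for k by (induction k) (simp_all add: fx)
  then show False using forestsD(3)[OF f, of x] x by auto
qed

lemma L1:
  assumes x: "x \<in> V - R" and r: "r \<in> R" and R: "R \<subseteq> V"
  shows "bij_betw (\<lambda>f. f(x:=x)) {f\<in>forests V R. f x = r} (forests V (insert x R))"
proof (rule bij_betw_byWitness[where f'="\<lambda>g. g(x:=r)"])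
  show "\<forall>a\<in>{f \<in> forests V R. f x = r}. a(x := x, x := r) = a" by auto
  show "\<forall>a'\<in>forests V (insert x R). a'(x := r, x := x) = a'"
    using forestsD(2) by (metis Diff_iff fun_upd_triv fun_upd_upd insertI1)
  show "(\<lambda>f. f(x := x)) ` {f \<in> forests V R. f x = r} \<subseteq> forests V (insert x R)"
  proof safe
    fix f assume f: "f \<in> forests V R" and fx: "r = f x"
    have "\<exists>j. ((f(x:=x))^^j) y \<in> insert x R" if y: "y \<in> V" for y
    proof -
      obtain k where "(f^^k) y \<in> R" using forestsD(3)[OF f y] by blast
      moreover have "\<And>z. z \<in> R \<Longrightarrow> \<exists>j. ((f(x:=x))^^j) z \<in> insert x R"
        by (metis funpow_0 insertCI)
      moreover have "\<And>z. z \<in> V \<Longrightarrow> (\<exists>j. ((f(x:=x))^^j) z \<in> insert x R) \<or> ((f(x:=x)) z = f z \<and> f z \<in> V)"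
      proof -
        fix z assume z: "z \<in> V"
        show "(\<exists>j. ((f(x:=x))^^j) z \<in> insert x R) \<or> ((f(x:=x)) z = f z \<and> f z \<in> V)"
        proof (cases "z \<in> insert x R")
          case True then show ?thesis by (metis funpow_0)
        next
          case False then show ?thesis using forestsD(1)[OF f, of z] z by auto
        qed
      qed
      ultimately show ?thesis using reach_transfer[of R "f(x:=x)" "insert x R" V f y k] y by blast
    qed
    then show "f(x := x) \<in> forests V (insert x R)"
      using forestsD(1,2)[OF f] unfolding forests_def by auto
  qed
  show "(\<lambda>g. g(x := r)) ` forests V (insert x R) \<subseteq> {f \<in> forests V R. f x = r}"
  proof safe
    fix g assume g: "g \<in> forests V (insert x R)"
    have "\<exists>j. ((g(x:=r))^^j) y \<in> R" if y: "y \<in> V" for y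
    proof -
      obtain k where "(g^^k) y \<in> insert x R" using forestsD(3)[OF g y] by blast
      moreover {
        fix z assume "z \<in> insert x R"
        then have "\<exists>j. ((g(x := r)) ^^ j) z \<in> R"
        proof
          assume "z = x"
          then have "((g(x := r)) ^^ 1) z \<in> R" using r by simp
          then show ?thesis by blast
        qed (auto intro: exI[of _ 0])
      }
      moreover {
        fix z assume z: "z \<in> V"
        have "(\<exists>j. ((g(x := r)) ^^ j) z \<in> R) \<or> (g(x := r)) z = g z \<and> g z \<in> V"
        proof (cases "z \<in> R \<or> z = x")
          case True
          then show ?thesis
          proof
            assume "z = x"
            then have "((g(x := r)) ^^ 1) z \<in> R" using r by simp
            then show ?thesis by blast
          qed (auto intro: exI[of _ 0])
        next
          case False
          then show ?thesis using forestsD(1)[OF g, of z] z by auto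
        qed
      }
      ultimately show ?thesis using reach_transfer[of "insert x R" "g(x:=r)" R V g y k] y by blast
    qed
    moreover have "y \<in> V - R \<Longrightarrow> (g(x:=r)) y \<in> V" for y using forestsD(1)[OF g, of y] r R by auto
    moreover have "y \<notin> V - R \<Longrightarrow> (g(x:=r)) y = y" for y using forestsD(2)[OF g, of y] x by auto
    ultimately show "g(x := r) \<in> forests V R" unfolding forests_def by auto
    show "(g(x := r)) x = r" by simp
  qed
qed

definition sw :: "nat \<Rightarrow> nat \<Rightarrow> nat \<Rightarrow> nat" where
  "sw d d' y = (if y = d then d' else if y = d' then d else y)"

lemma sw_sw[simp]: "sw d d' (sw d d' y) = y" by (simp add: sw_def)

lemma conj_pow: "((sw d d' \<circ> f \<circ> sw d d') ^^ k) = sw d d' \<circ> (f^^k) \<circ> sw d d'"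
  by (induction k) (auto simp: fun_eq_iff)

lemma conj_in:
  assumes f: "f \<in> forests V R" and d: "d \<in> V - R" and d': "d' \<in> V - R"
  shows "sw d d' \<circ> f \<circ> sw d d' \<in> forests V R"
proof -
  have swV: "y \<in> V \<Longrightarrow> sw d d' y \<in> V" for y using d d' by (auto simp: sw_def)
  have swVR: "y \<in> V - R \<Longrightarrow> sw d d' y \<in> V - R" for y using d d' by (auto simp: sw_def)
  have swR: "y \<notin> V - R \<Longrightarrow> sw d d' y = y" for y using d d' by (auto simp: sw_def)
  have swRR: "y \<in> R \<Longrightarrow> sw d d' y = y" for y using d d' by (auto simp: sw_def)
  have "\<exists>k. ((sw d d' \<circ> f \<circ> sw d d')^^k) y \<in> R" if y: "y \<in> V" for y
  proof -
    obtain k where "(f^^k) (sw d d' y) \<in> R" using forestsD(3)[OF f swV[OF y]] by blast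
    then have "((sw d d' \<circ> f \<circ> sw d d')^^k) y \<in> R" unfolding conj_pow using swRR by simp
    then show ?thesis by blast
  qed
  moreover have "y \<in> V - R \<Longrightarrow> (sw d d' \<circ> f \<circ> sw d d') y \<in> V" for y
    using swV forestsD(1)[OF f] swVR by simp
  moreover have "y \<notin> V - R \<Longrightarrow> (sw d d' \<circ> f \<circ> sw d d') y = y" for y
    using swR forestsD(2)[OF f] by simp
  ultimately show ?thesis unfolding forests_def by auto
qed

lemma sym_count:
  assumes c: "c \<in> V - R" and d: "d \<in> V - R" and d': "d' \<in> V - R" and cd: "c \<noteq> d" "c \<noteq> d'"
  shows "card {f\<in>forests V R. f c = d} = card {f\<in>forests V R. f c = d'}"
proof (rule bij_betw_same_card[of "\<lambda>f. sw d d' \<circ> f \<circ> sw d d'"],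
       rule bij_betw_byWitness[where f'="\<lambda>f. sw d d' \<circ> f \<circ> sw d d'"])
  have swc: "sw d d' c = c" using cd by (simp add: sw_def)
  show "\<forall>a\<in>{f \<in> forests V R. f c = d}. sw d d' \<circ> (sw d d' \<circ> a \<circ> sw d d') \<circ> sw d d' = a"
    by (auto simp: fun_eq_iff)
  show "\<forall>a'\<in>{f \<in> forests V R. f c = d'}. sw d d' \<circ> (sw d d' \<circ> a' \<circ> sw d d') \<circ> sw d d' = a'"
    by (auto simp: fun_eq_iff)
  show "(\<lambda>f. sw d d' \<circ> f \<circ> sw d d') ` {f \<in> forests V R. f c = d} \<subseteq> {f \<in> forests V R. f c = d'}"
    using conj_in[OF _ d d'] swc by (auto simp: sw_def)
  show "(\<lambda>f. sw d d' \<circ> f \<circ> sw d d') ` {f \<in> forests V R. f c = d'} \<subseteq> {f \<in> forests V R. f c = d}"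
    using conj_in[OF _ d d'] swc by (auto simp: sw_def)
qed


lemma card_split:
  assumes c: "c \<in> V - R" and R: "R \<subseteq> V" and V: "finite V"
  shows "card (forests V R) = card R * card (forests V (insert c R)) + (\<Sum>d\<in>V-R-{c}. card {f\<in>forests V R. f c = d})"
proof -
  have finF: "finite (forests V R)" using forests_finite V by blast
  have img: "(\<lambda>f. f c) ` forests V R \<subseteq> V - {c}"
  proof
    fix y assume "y \<in> (\<lambda>f. f c) ` forests V R"
    then obtain f where f: "f \<in> forests V R" and y: "y = f c" by blast
    show "y \<in> V - {c}" using forestsD(1)[OF f c] no_fix[OF f c] y by simp
  qed
  have "card (forests V R) = (\<Sum>y\<in>V-{c}. card {f\<in>forests V R. f c = y})"
    using card_fibres[OF finF _ img] V by simp
  also have "V - {c} = R \<union> (V-R-{c})" using R c by auto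
  also have "(\<Sum>y\<in>R \<union> (V-R-{c}). card {f\<in>forests V R. f c = y})
     = (\<Sum>y\<in>R. card {f\<in>forests V R. f c = y}) + (\<Sum>y\<in>V-R-{c}. card {f\<in>forests V R. f c = y})"
    using V R finite_subset by (intro sum.union_disjoint) auto
  also have "(\<Sum>y\<in>R. card {f\<in>forests V R. f c = y}) = (\<Sum>y\<in>R. card (forests V (insert c R)))"
    using bij_betw_same_card[OF L1[OF c _ R]] by simp
  finally show ?thesis by simp
qed

lemma H_count:
  assumes c: "c \<in> V - R" and d: "d \<in> V - R" and cd: "c \<noteq> d" and R: "R \<subseteq> V" "R \<noteq> {}"
    and V: "finite V"
  shows "card {f\<in>forests V R. f c = d} * card V = card R * card V ^ (card (V - R) - 1)"
proof -
  define m k n H F F' where "m = card (V - R)" and "k = card R" and "n = card V"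
    and "H = card {f\<in>forests V R. f c = d}" and "F = card (forests V R)"
    and "F' = card (forests V (insert c R))"
  have finR: "finite R" using V R finite_subset by blast
  have fVR: "finite (V - R)" using V by simp
  have n: "n = m + k" unfolding n_def m_def k_def
    using card_Diff_subset[OF finR R(1)] card_mono[OF V R(1)] by simp
  have cdm: "{c, d} \<subseteq> V - R" using c d by auto
  have "card {c, d} \<le> m" unfolding m_def using card_mono[OF fVR cdm] .
  then have m2: "m \<ge> 2" using cd by simp
  have "(\<Sum>d'\<in>V-R-{c}. card {f\<in>forests V R. f c = d'}) = (\<Sum>d'\<in>V-R-{c}. H)"
    unfolding H_def using sym_count[OF c _ d] cd by (intro sum.cong) auto
  also have "\<dots> = (m - 1) * H" using c fVR unfolding m_def by (simp add: card_Diff_singleton)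
  finally have split: "F = k * F' + (m - 1) * H"
    using card_split[OF c R(1) V] unfolding F_def F'_def k_def by simp
  have Fn: "F * n = k * n ^ m" using forests_card[OF V R] unfolding F_def n_def k_def m_def .
  have R': "insert c R \<subseteq> V" using c R by auto
  have "card (insert c R) = k + 1" using c finR unfolding k_def by simp
  moreover have "card (V - insert c R) = m - 1" unfolding m_def using c fVR
    by (metis Diff_insert card_Diff_singleton Diff_iff insert_Diff1)
  ultimately have F'n: "F' * n = (k + 1) * n ^ (m - 1)"
    using forests_card[OF V R'] unfolding F'_def n_def by simp
  define M N where "M = m - 1" and "N = n ^ (m - 1)"
  have M0: "M > 0" using m2 unfolding M_def by simp
  have "m = Suc (m - 1)" using m2 by simp
  then have nn: "n ^ m = N * n" unfolding N_def by (metis power_Suc2)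
  have nMk: "n = M + (k + 1)" using n m2 unfolding M_def by simp
  have "k * (N * n) = k * (F' * n) + M * (H * n)"
    using Fn split nn unfolding M_def by (simp add: algebra_simps)
  then have e1: "k * (N * n) = k * ((k + 1) * N) + M * (H * n)"
    using F'n unfolding N_def by simp
  have e2: "k * (N * n) = k * N * M + k * ((k + 1) * N)"
    unfolding nMk by (simp add: algebra_simps)
  have "k * N * M = M * (H * n)" using e1 e2 by simp
  then have "M * (k * N) = M * (H * n)" by (simp add: ac_simps)
  then have "H * n = k * N" using M0 by (metis mult_left_cancel not_gr0)
  then show ?thesis unfolding H_def n_def k_def N_def m_def by simp
qed


definition tedges :: "nat set \<Rightarrow> nat set \<Rightarrow> (nat \<Rightarrow> nat) \<Rightarrow> nat set set" where
  "tedges V R f = (\<lambda>x. {x, f x}) ` (V - R)"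

lemma adj_sym: "(x, y) \<in> adj T \<Longrightarrow> (y, x) \<in> adj T"
  by (auto simp: adj_def insert_commute)

lemma adj_rtrancl_sym: "(x, y) \<in> (adj T)\<^sup>* \<Longrightarrow> (y, x) \<in> (adj T)\<^sup>*"
proof (induction rule: rtrancl_induct)
  case base then show ?case by simp
next
  case (step y z)
  then show ?case using adj_sym by (meson converse_rtrancl_into_rtrancl)
qed

lemma adj_mono: "T \<subseteq> T' \<Longrightarrow> adj T \<subseteq> adj T'"
  by (auto simp: adj_def)

lemma Kn_edgesD: "{a, b} \<in> Kn_edges n \<Longrightarrow> a \<in> {1..n} \<and> b \<in> {1..n} \<and> a \<noteq> b"
  unfolding Kn_edges_def by (auto simp: doubleton_eq_iff)

lemma no_cycle:
  assumes f: "f \<in> forests V {r}" and x: "x \<in> V - {r}"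
  shows "(f^^Suc k) x \<noteq> x"
proof
  assume cyc: "(f^^Suc k) x = x"
  have per: "(f^^(t * Suc k)) x = x" for t
  proof (induction t)
    case 0 then show ?case by simp
  next
    case (Suc t)
    have e: "Suc t * Suc k = t * Suc k + Suc k" by simp
    have "(f^^(Suc t * Suc k)) x = (f^^(t * Suc k)) ((f^^Suc k) x)"
      unfolding e by (simp only: funpow_add comp_apply)
    then show ?case using cyc Suc.IH by simp
  qed
  have fr: "f r = r" using forestsD(2)[OF f, of r] by simp
  have frr: "(f^^i) r = r" for i by (induction i) (simp_all add: fr)
  obtain j where j: "(f^^j) x = r" using forestsD(3)[OF f, of x] x by auto
  have "j \<le> j * Suc k" by simp
  then have "(f^^(j * Suc k)) x = (f^^(j * Suc k - j)) ((f^^j) x)"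
    by (metis comp_apply funpow_add le_add_diff_inverse2)
  then have "(f^^(j * Suc k)) x = r" using j frr by simp
  then show False using per[of j] x by simp
qed

lemma reach_root:
  assumes f: "f \<in> forests V {r}" and sub: "tedges V {r} f \<subseteq> T" and y: "y \<in> V"
  shows "(y, r) \<in> (adj T)\<^sup>*"
proof -
  have "\<And>y. y \<in> V \<Longrightarrow> (f^^k) y = r \<Longrightarrow> (y, r) \<in> (adj T)\<^sup>*" for k
  proof (induction k)
    case 0 then show ?case by simp
  next
    case (Suc k y)
    show ?case
    proof (cases "y = r")
      case True then show ?thesis by simp
    next
      case False
      then have yV: "y \<in> V - {r}" using Suc.prems by simp
      have "{y, f y} \<in> T" using sub yV unfolding tedges_def by auto
      moreover have "f y \<noteq> y" using no_fix[OF f yV] .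
      ultimately have "(y, f y) \<in> adj T" unfolding adj_def by auto
      moreover have "(f y, r) \<in> (adj T)\<^sup>*"
        using Suc.IH[of "f y"] forestsD(1)[OF f yV] Suc.prems(2)
        by (simp add: funpow_Suc_right del: funpow.simps)
      ultimately show ?thesis by (meson converse_rtrancl_into_rtrancl)
    qed
  qed
  then show ?thesis using forestsD(3)[OF f y] y by auto
qed

lemma tree_of_forest:
  assumes f: "f \<in> forests {1..n} {r}" and r: "r \<in> {1..n}"
  shows "is_spanning_tree n (tedges {1..n} {r} f)"
proof -
  define V where "V = {1..n::nat}"
  define T where "T = tedges V {r} f"
  have fV: "f \<in> forests V {r}" using f V_def by simp
  have sub: "T \<subseteq> Kn_edges n"
  proof
    fix e assume "e \<in> T"
    then obtain x where x: "x \<in> V - {r}" and e: "e = {x, f x}" unfolding T_def tedges_def by auto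
    have "f x \<in> V" using forestsD(1)[OF fV x] .
    moreover have "f x \<noteq> x" using no_fix[OF fV x] .
    ultimately show "e \<in> Kn_edges n" unfolding Kn_edges_def using x e V_def by auto
  qed
  have conn: "connected_by T u v" if "u \<in> V" "v \<in> V" for u v
  proof -
    have "(u, r) \<in> (adj T)\<^sup>*" using reach_root[OF fV _ that(1)] T_def by simp
    moreover have "(r, v) \<in> (adj T)\<^sup>*" using reach_root[OF fV _ that(2)] T_def adj_rtrancl_sym by simp
    ultimately show ?thesis unfolding connected_by_def by simp
  qed
  have bridge: "\<not> connected_by (T - {e}) u v" if e: "e \<in> T" "e = {u, v}" for e u v
  proof -
    obtain x where x: "x \<in> V - {r}" and ex: "e = {x, f x}" using e unfolding T_def tedges_def by auto
    define D where "D = {y. \<exists>k. (f^^k) y = x}"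
    have closed: "z \<in> D" if yz: "(y, z) \<in> adj (T - {e})" and yD: "y \<in> D" for y z
    proof -
      have yzT: "{y, z} \<in> T" "{y, z} \<noteq> e" "y \<noteq> z" using yz unfolding adj_def by auto
      then obtain w where w: "w \<in> V - {r}" and wyz: "{y, z} = {w, f w}" unfolding T_def tedges_def by auto
      obtain k where k: "(f^^k) y = x" using yD D_def by auto
      from wyz show ?thesis unfolding doubleton_eq_iff
      proof
        assume a: "y = w \<and> z = f w"
        show ?thesis
        proof (cases k)
          case 0
          then have "y = x" using k by simp
          then show ?thesis using a yzT(2) ex by simp
        next
          case (Suc k')
          then have "(f^^k') (f y) = x" using k by (simp add: funpow_Suc_right del: funpow.simps)
          then show ?thesis using a D_def by auto
        qed
      next
        assume a: "y = f w \<and> z = w"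
        then have "(f^^Suc k) z = x" using k by (simp add: funpow_Suc_right del: funpow.simps)
        then show ?thesis using D_def by blast
      qed
    qed
    have reachD: "(x, w) \<in> (adj (T - {e}))\<^sup>* \<Longrightarrow> w \<in> D" for w
    proof (induction rule: rtrancl_induct)
      case base then show ?case unfolding D_def by (auto intro: exI[of _ 0])
    next
      case (step y z) then show ?case using closed by blast
    qed
    have "f x \<notin> D"
    proof
      assume "f x \<in> D"
      then obtain k where "(f^^k) (f x) = x" unfolding D_def by auto
      then have "(f^^Suc k) x = x" by (simp add: funpow_Suc_right del: funpow.simps)
      then show False using no_cycle[OF fV x] by blast
    qed
    then have nc: "(x, f x) \<notin> (adj (T - {e}))\<^sup>*" using reachD by blast
    then have nc': "(f x, x) \<notin> (adj (T - {e}))\<^sup>*" using adj_rtrancl_sym by blast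
    have "{u, v} = {x, f x}" using e ex by simp
    then show ?thesis unfolding connected_by_def doubleton_eq_iff using nc nc' by auto
  qed
  show ?thesis unfolding is_spanning_tree_def T_def[symmetric] V_def[symmetric]
    using sub conn bridge by (auto simp: V_def)
qed


lemma forest_of_tree:
  assumes T: "is_spanning_tree n T" and r: "r \<in> {1..n}"
  shows "\<exists>f\<in>forests {1..n} {r}. tedges {1..n} {r} f = T"
proof -
  define V where "V = {1..n::nat}"
  define A where "A = adj T"
  have T': "T \<subseteq> Kn_edges n \<and> (\<forall>u\<in>{1..n}. \<forall>v\<in>{1..n}. connected_by T u v) \<and>
     (\<forall>e\<in>T. \<forall>u v. e = {u, v} \<longrightarrow> \<not> connected_by (T - {e}) u v)"
    using T unfolding is_spanning_tree_def .
  have sub: "T \<subseteq> Kn_edges n" using T' by (rule conjunct1)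
  have C: "\<forall>u\<in>V. \<forall>v\<in>V. connected_by T u v" using conjunct1[OF conjunct2[OF T']] unfolding V_def .
  have conn: "(u, v) \<in> A\<^sup>*" if "u \<in> V" "v \<in> V" for u v
    using bspec[OF bspec[OF C that(1)] that(2)] unfolding connected_by_def A_def .
  have B: "\<forall>e\<in>T. \<forall>u v. e = {u, v} \<longrightarrow> \<not> connected_by (T - {e}) u v" using conjunct2[OF conjunct2[OF T']] .
  have bridge: "\<not> connected_by (T - {e}) u v" if "e \<in> T" "e = {u, v}" for e u v
  proof -
    have "\<forall>u v. e = {u, v} \<longrightarrow> \<not> connected_by (T - {e}) u v" using bspec[OF B that(1)] .
    then show ?thesis using that(2) by blast
  qed
  define dist where "dist y = (LEAST k. (y, r) \<in> A ^^ k)" for y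
  have dist: "(y, r) \<in> A ^^ dist y" if "y \<in> V" for y
  proof -
    have "r \<in> V" using r V_def by simp
    then have "(y, r) \<in> A\<^sup>*" using conn[OF that] by simp
    then obtain k where "(y, r) \<in> A ^^ k" unfolding rtrancl_power by (elim exE)
    then show ?thesis unfolding dist_def by (rule LeastI)
  qed
  have Aedge: "{y, z} \<in> T \<and> y \<noteq> z" if "(y, z) \<in> A" for y z using that unfolding A_def adj_def by auto
  have AV: "z \<in> V" if "(y, z) \<in> A" for y z
  proof -
    have "{y, z} \<in> Kn_edges n" using Aedge[OF that] sub by blast
    then show ?thesis using Kn_edgesD[of y z n] V_def by simp
  qed
  define P where "P y z = ((y, z) \<in> A \<and> (z, r) \<in> A ^^ (dist y - 1))" for y z
  have dpos: "dist y > 0" if y: "y \<in> V - {r}" for y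
  proof (rule ccontr)
    assume "\<not> dist y > 0"
    then have d0: "dist y = 0" by simp
    have yV: "y \<in> V" using y by simp
    have "(y, r) \<in> A ^^ 0" using dist[OF yV] unfolding d0 .
    then have "y = r" by simp
    then show False using y by simp
  qed
  have exP: "\<exists>z. P y z" if y: "y \<in> V - {r}" for y
  proof -
    obtain j where j: "dist y = Suc j" using dpos[OF y] gr0_conv_Suc by auto
    have yV: "y \<in> V" using y by simp
    have "(y, r) \<in> A ^^ Suc j" using dist[OF yV] unfolding j .
    then obtain z where z: "(y, z) \<in> A" "(z, r) \<in> A ^^ j" using relpow_Suc_D2 by metis
    have "P y z" unfolding P_def using z j by simp
    then show ?thesis by (rule exI)
  qed
  define f where "f y = (if y \<in> V - {r} then (SOME z. P y z) else y)" for y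
  have fP: "P y (f y)" if "y \<in> V - {r}" for y
  proof -
    have "f y = (SOME z. P y z)" unfolding f_def using that by (rule if_P)
    then show ?thesis using someI_ex[OF exP[OF that]] by simp
  qed
  have fA: "(y, f y) \<in> A" if "y \<in> V - {r}" for y using fP[OF that] unfolding P_def by (rule conjunct1)
  have fV: "f y \<in> V" if "y \<in> V - {r}" for y using AV[OF fA[OF that]] .
  have fd: "dist (f y) < dist y" if "y \<in> V - {r}" for y
  proof -
    have "(f y, r) \<in> A ^^ (dist y - 1)" using fP[OF that] unfolding P_def by simp
    then have "dist (f y) \<le> dist y - 1" unfolding dist_def[of "f y"] by (rule Least_le)
    then show ?thesis using dpos[OF that] by simp
  qed
  have reach: "\<exists>k. (f^^k) y \<in> {r}" if "y \<in> V" for y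
    using that
  proof (induction "dist y" arbitrary: y rule: less_induct)
    case less
    show ?case
    proof (cases "y = r")
      case True then show ?thesis by (metis funpow_0 singletonI)
    next
      case False
      then have y: "y \<in> V - {r}" using less.prems by simp
      obtain k where "(f^^k) (f y) \<in> {r}" using less.hyps[OF fd[OF y] fV[OF y]] by blast
      then have "(f^^Suc k) y \<in> {r}" by (simp add: funpow_Suc_right del: funpow.simps)
      then show ?thesis by blast
    qed
  qed
  have fout: "f y = y" if "y \<notin> V - {r}" for y unfolding f_def by (rule if_not_P[OF that])
  have fF: "f \<in> forests V {r}" unfolding forests_def mem_Collect_eq using fV reach fout by blast
  have ET: "tedges V {r} f \<subseteq> T"
  proof
    fix e assume "e \<in> tedges V {r} f"
    then obtain y where y: "y \<in> V - {r}" "e = {y, f y}" unfolding tedges_def by blast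
    show "e \<in> T" using Aedge[OF fA[OF y(1)]] y(2) by simp
  qed
  have TE: "T \<subseteq> tedges V {r} f"
  proof
    fix e assume e: "e \<in> T"
    then obtain u v where uv: "e = {u, v}" "u \<in> V" "v \<in> V" "u \<noteq> v"
      using sub unfolding Kn_edges_def V_def by auto
    show "e \<in> tedges V {r} f"
    proof (rule ccontr)
      assume "e \<notin> tedges V {r} f"
      then have sub': "tedges V {r} f \<subseteq> T - {e}" using ET by auto
      have "(u, r) \<in> (adj (T - {e}))\<^sup>*" using reach_root[OF fF sub' uv(2)] .
      moreover have "(r, v) \<in> (adj (T - {e}))\<^sup>*" using reach_root[OF fF sub' uv(3)] adj_rtrancl_sym by blast
      ultimately have "connected_by (T - {e}) u v" unfolding connected_by_def by simp
      then show False using bridge[OF e uv(1)] by simp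
    qed
  qed
  have "f \<in> forests V {r} \<and> tedges V {r} f = T" using fF ET TE by simp
  then show ?thesis unfolding V_def by blast
qed

lemma forest_inj:
  assumes f: "f \<in> forests V {r}" and g: "g \<in> forests V {r}"
    and E: "tedges V {r} f = tedges V {r} g"
  shows "f = g"
proof
  fix y
  have "\<And>y. y \<in> V \<Longrightarrow> (f^^k) y = r \<Longrightarrow> f y = g y" for k
  proof (induction k)
    case 0 then show ?case using forestsD(2)[OF f, of r] forestsD(2)[OF g, of r] by simp
  next
    case (Suc k y)
    show ?case
    proof (rule ccontr)
      assume ne: "f y \<noteq> g y"
      then have yr: "y \<noteq> r" using forestsD(2)[OF f, of r] forestsD(2)[OF g, of r] by auto
      then have y: "y \<in> V - {r}" using Suc.prems by simp
      have "{y, g y} \<in> tedges V {r} f" using E y unfolding tedges_def by auto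
      then obtain w where w: "w \<in> V - {r}" "{y, g y} = {w, f w}" unfolding tedges_def by auto
      have "y \<noteq> w" using w(2) ne by (auto simp: doubleton_eq_iff)
      have "{y, f y} \<in> tedges V {r} g" using E y unfolding tedges_def by auto
      then obtain w' where w': "w' \<in> V - {r}" "{y, f y} = {w', g w'}" unfolding tedges_def by auto
      have "g (f y) = y" "f y = w'" using w'(2) ne by (auto simp: doubleton_eq_iff)
      have fyV: "f y \<in> V" using forestsD(1)[OF f y] .
      have "(f^^k) (f y) = r" using Suc.prems(2) by (simp add: funpow_Suc_right del: funpow.simps)
      then have "f (f y) = g (f y)" using Suc.IH fyV by blast
      then have "(f^^Suc 1) y = y" using \<open>g (f y) = y\<close> by simp
      then show False using no_cycle[OF f y] by blast
    qed
  qed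
  note main = this
  show "f y = g y"
  proof (cases "y \<in> V")
    case True
    then obtain k where "(f^^k) y \<in> {r}" using forestsD(3)[OF f, of y] by blast
    then show ?thesis using main[of y k] True by simp
  next
    case False
    then show ?thesis using forestsD(2)[OF f, of y] forestsD(2)[OF g, of y] by simp
  qed
qed

lemma tree_bij:
  assumes r: "r \<in> {1..n}"
  shows "bij_betw (tedges {1..n} {r}) (forests {1..n} {r}) (spanning_trees n)"
  unfolding bij_betw_def
proof
  show "inj_on (tedges {1..n} {r}) (forests {1..n} {r})"
    using forest_inj by (meson inj_onI)
  show "tedges {1..n} {r} ` forests {1..n} {r} = spanning_trees n"
  proof
    show "tedges {1..n} {r} ` forests {1..n} {r} \<subseteq> spanning_trees n"
      using tree_of_forest[OF _ r] unfolding spanning_trees_def by blast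
    show "spanning_trees n \<subseteq> tedges {1..n} {r} ` forests {1..n} {r}"
    proof
      fix T assume "T \<in> spanning_trees n"
      then obtain f where "f \<in> forests {1..n} {r}" "tedges {1..n} {r} f = T"
        using forest_of_tree[OF _ r] unfolding spanning_trees_def by blast
      then show "T \<in> tedges {1..n} {r} ` forests {1..n} {r}" by blast
    qed
  qed
qed

lemma card_restrict_bij:
  assumes "bij_betw h A B" "\<And>x. x \<in> A \<Longrightarrow> P x \<longleftrightarrow> Q (h x)"
  shows "card {x\<in>A. P x} = card {y\<in>B. Q y}"
proof -
  have "{y\<in>B. Q y} = h ` {x\<in>A. P x}" using assms unfolding bij_betw_def by auto
  moreover have "inj_on h {x\<in>A. P x}" using assms unfolding bij_betw_def by (auto intro: inj_on_subset)
  ultimately show ?thesis by (simp add: card_image)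
qed


lemma no_cycle_gen:
  assumes f: "f \<in> forests V R" and x: "x \<in> V - R"
  shows "(f^^Suc k) x \<noteq> x"
proof
  assume cyc: "(f^^Suc k) x = x"
  have per: "(f^^(t * Suc k)) x = x" for t
  proof (induction t)
    case 0 then show ?case by simp
  next
    case (Suc t)
    have e: "Suc t * Suc k = t * Suc k + Suc k" by simp
    have "(f^^(Suc t * Suc k)) x = (f^^(t * Suc k)) ((f^^Suc k) x)"
      unfolding e by (simp only: funpow_add comp_apply)
    then show ?case using cyc Suc.IH by simp
  qed
  obtain j where j: "(f^^j) x \<in> R" using forestsD(3)[OF f, of x] x by auto
  have frr: "(f^^i) y = y" if "y \<in> R" for i y
  proof (induction i)
    case 0 then show ?case by simp
  next
    case (Suc i) then show ?case using forestsD(2)[OF f, of y] that by simp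
  qed
  have "j \<le> j * Suc k" by simp
  then have "(f^^(j * Suc k)) x = (f^^(j * Suc k - j)) ((f^^j) x)"
    by (metis comp_apply funpow_add le_add_diff_inverse2)
  then have "(f^^(j * Suc k)) x \<in> R" using j frr[OF j] by simp
  then show False using per[of j] x by simp
qed

lemma edge_root:
  assumes f: "f \<in> forests V {a}" and b: "b \<in> V" "b \<noteq> a"
  shows "{a, b} \<in> tedges V {a} f \<longleftrightarrow> f b = a"
proof
  assume "{a, b} \<in> tedges V {a} f"
  then obtain w where w: "w \<in> V - {a}" "{a, b} = {w, f w}" unfolding tedges_def by auto
  then show "f b = a" by (auto simp: doubleton_eq_iff)
next
  assume "f b = a"
  then have "{a, b} = {b, f b}" by auto
  then show "{a, b} \<in> tedges V {a} f" using b unfolding tedges_def by auto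
qed

lemma edge_nonroot:
  assumes c: "c \<in> V" "c \<noteq> a" and d: "d \<in> V" "d \<noteq> a"
  shows "{c, d} \<in> tedges V {a} f \<longleftrightarrow> f c = d \<or> f d = c"
proof
  assume "{c, d} \<in> tedges V {a} f"
  then obtain w where w: "w \<in> V - {a}" "{c, d} = {w, f w}" unfolding tedges_def by auto
  then show "f c = d \<or> f d = c" by (auto simp: doubleton_eq_iff)
next
  assume "f c = d \<or> f d = c"
  then show "{c, d} \<in> tedges V {a} f"
  proof
    assume "f c = d"
    then have "{c, d} = {c, f c}" by simp
    then show ?thesis using c unfolding tedges_def by auto
  next
    assume "f d = c"
    then have "{c, d} = {d, f d}" by auto
    then show ?thesis using d unfolding tedges_def by auto
  qed
qed

lemma trees_to_forests:
  assumes a: "a \<in> {1..n}"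
  shows "card {T\<in>spanning_trees n. P T} = card {f\<in>forests {1..n} {a}. P (tedges {1..n} {a} f)}"
  using card_restrict_bij[OF tree_bij[OF a], of "\<lambda>f. P (tedges {1..n} {a} f)" P] by simp

lemma card_ST: "n \<ge> 1 \<Longrightarrow> card (spanning_trees n) * n = n ^ (n - 1)"
proof -
  assume n: "n \<ge> 1"
  have a: "(1::nat) \<in> {1..n}" using n by simp
  have "card (spanning_trees n) = card (forests {1..n} {1})"
    using bij_betw_same_card[OF tree_bij[OF a]] by simp
  moreover have "card (forests {1..n} {1}) * card {1..n} = card {1::nat} * card {1..n} ^ card ({1..n} - {1})"
    using forests_card[of "{1..n}" "{1}"] a by simp
  ultimately show ?thesis using a by simp
qed

lemma card_one_edge:
  assumes ab: "a \<in> {1..n}" "b \<in> {1..n}" "a \<noteq> b"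
  shows "card {T\<in>spanning_trees n. {a, b} \<in> T} * n = 2 * n ^ (n - 2)"
proof -
  define V where "V = {1..n}"
  have aV: "a \<in> V" and bV: "b \<in> V" using ab V_def by auto
  have "card {T\<in>spanning_trees n. {a, b} \<in> T} = card {f\<in>forests V {a}. {a, b} \<in> tedges V {a} f}"
    using trees_to_forests[OF ab(1)] V_def by simp
  also have "\<dots> = card {f\<in>forests V {a}. f b = a}"
    using edge_root[OF _ bV] ab by (intro arg_cong[where f=card]) auto
  also have "\<dots> = card (forests V {b, a})"
    using bij_betw_same_card[OF L1[of b V "{a}" a]] aV bV ab by simp
  finally have eq: "card {T\<in>spanning_trees n. {a, b} \<in> T} = card (forests V {b, a})" .
  have "card (forests V {b, a}) * card V = card {b, a} * card V ^ card (V - {b, a})"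
    using forests_card[of V "{b, a}"] aV bV V_def by simp
  moreover have "card (V - {b, a}) = n - 2" using aV bV ab V_def by (simp add: card_Diff_subset)
  ultimately show ?thesis using eq ab V_def by simp
qed

lemma card_adj_edges:
  assumes abc: "a \<in> {1..n}" "b \<in> {1..n}" "c \<in> {1..n}" "a \<noteq> b" "a \<noteq> c" "b \<noteq> c"
  shows "card {T\<in>spanning_trees n. {a, b} \<in> T \<and> {a, c} \<in> T} * n = 3 * n ^ (n - 3)"
proof -
  define V where "V = {1..n}"
  have aV: "a \<in> V" and bV: "b \<in> V" and cV: "c \<in> V" using abc V_def by auto
  have "card {T\<in>spanning_trees n. {a, b} \<in> T \<and> {a, c} \<in> T}
      = card {f\<in>forests V {a}. {a, b} \<in> tedges V {a} f \<and> {a, c} \<in> tedges V {a} f}"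
    using trees_to_forests[OF abc(1)] V_def by simp
  also have "\<dots> = card {f\<in>{f\<in>forests V {a}. f b = a}. f c = a}"
    using edge_root[OF _ bV] edge_root[OF _ cV] abc by (intro arg_cong[where f=card]) auto
  also have "\<dots> = card {g\<in>forests V {b, a}. g c = a}"
    using abc by (intro card_restrict_bij[OF L1[of b V "{a}" a]]) (auto simp: aV bV)
  also have "\<dots> = card (forests V {c, b, a})"
    using bij_betw_same_card[OF L1[of c V "{b, a}" a]] aV bV cV abc by simp
  finally have eq: "card {T\<in>spanning_trees n. {a, b} \<in> T \<and> {a, c} \<in> T} = card (forests V {c, b, a})" .
  have "card (forests V {c, b, a}) * card V = card {c, b, a} * card V ^ card (V - {c, b, a})"
    using forests_card[of V "{c, b, a}"] aV bV cV V_def by simp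
  moreover have "card (V - {c, b, a}) = n - 3" using aV bV cV abc V_def by (simp add: card_Diff_subset)
  moreover have "card {c, b, a} = 3" using abc by simp
  ultimately show ?thesis using eq V_def by simp
qed

lemma card_disj_edges:
  assumes abcd: "a \<in> {1..n}" "b \<in> {1..n}" "c \<in> {1..n}" "d \<in> {1..n}"
    and dist: "a \<noteq> b" "a \<noteq> c" "a \<noteq> d" "b \<noteq> c" "b \<noteq> d" "c \<noteq> d"
  shows "card {T\<in>spanning_trees n. {a, b} \<in> T \<and> {c, d} \<in> T} * n = 4 * n ^ (n - 3)"
proof -
  define V where "V = {1..n}"
  have aV: "a \<in> V" and bV: "b \<in> V" and cV: "c \<in> V" and dV: "d \<in> V" using abcd V_def by auto
  have finV: "finite V" using V_def by simp
  have "card {T\<in>spanning_trees n. {a, b} \<in> T \<and> {c, d} \<in> T}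
      = card {f\<in>forests V {a}. {a, b} \<in> tedges V {a} f \<and> {c, d} \<in> tedges V {a} f}"
    using trees_to_forests[OF abcd(1)] V_def by simp
  also have "\<dots> = card {f\<in>{f\<in>forests V {a}. f b = a}. f c = d \<or> f d = c}"
    using edge_root[OF _ bV] edge_nonroot[OF cV _ dV] dist by (intro arg_cong[where f=card]) auto
  also have "\<dots> = card {g\<in>forests V {b, a}. g c = d \<or> g d = c}"
    using dist by (intro card_restrict_bij[OF L1[of b V "{a}" a]]) (auto simp: aV bV)
  also have "{g\<in>forests V {b, a}. g c = d \<or> g d = c}
      = {g\<in>forests V {b, a}. g c = d} \<union> {g\<in>forests V {b, a}. g d = c}" by auto
  also have "card \<dots> = card {g\<in>forests V {b, a}. g c = d} + card {g\<in>forests V {b, a}. g d = c}"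
  proof (rule card_Un_disjoint)
    show "finite {g \<in> forests V {b, a}. g c = d}" using forests_finite[OF finV] by simp
    show "finite {g \<in> forests V {b, a}. g d = c}" using forests_finite[OF finV] by simp
    show "{g \<in> forests V {b, a}. g c = d} \<inter> {g \<in> forests V {b, a}. g d = c} = {}"
    proof -
      have False if g: "g \<in> forests V {b, a}" and gc: "g c = d" "g d = c" for g
      proof -
        have "(g^^Suc 1) c = c" using gc by simp
        then show False using no_cycle_gen[OF g, of c 1] cV dist by simp
      qed
      then show ?thesis by blast
    qed
  qed
  finally have eq: "card {T\<in>spanning_trees n. {a, b} \<in> T \<and> {c, d} \<in> T}
     = card {g\<in>forests V {b, a}. g c = d} + card {g\<in>forests V {b, a}. g d = c}" .
  have VR: "card (V - {b, a}) = n - 2" using aV bV dist V_def by (simp add: card_Diff_subset)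
  have n3: "n - 2 - 1 = n - 3" by simp
  have cV': "card V = n" "card {b, a} = 2" using V_def dist by auto
  have "card {g\<in>forests V {b, a}. g c = d} * card V = card {b, a} * card V ^ (card (V - {b, a}) - 1)"
    using H_count[of c V "{b, a}" d] aV bV cV dV dist finV by simp
  then have h1: "card {g\<in>forests V {b, a}. g c = d} * n = 2 * n ^ (n - 3)"
    unfolding VR n3 cV' .
  have "card {g\<in>forests V {b, a}. g d = c} * card V = card {b, a} * card V ^ (card (V - {b, a}) - 1)"
    using H_count[of d V "{b, a}" c] aV bV cV dV dist finV by simp
  then have h2: "card {g\<in>forests V {b, a}. g d = c} * n = 2 * n ^ (n - 3)"
    unfolding VR n3 cV' .
  show ?thesis unfolding eq add_mult_distrib h1 h2 by simp
qed


lemma tuples_Suc: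
  "{ts. length ts = Suc k \<and> set ts \<subseteq> A} = (\<lambda>(t, ts). t # ts) ` (A \<times> {ts. length ts = k \<and> set ts \<subseteq> A})"
proof (intro set_eqI iffI)
  fix xs assume "xs \<in> {ts. length ts = Suc k \<and> set ts \<subseteq> A}"
  then obtain t ts where "xs = t # ts" "length ts = k" "t \<in> A" "set ts \<subseteq> A" by (cases xs) auto
  then show "xs \<in> (\<lambda>(t, ts). t # ts) ` (A \<times> {ts. length ts = k \<and> set ts \<subseteq> A})" by force
qed auto

lemma sum_prod_tuples:
  fixes g :: "nat \<Rightarrow> 'a \<Rightarrow> real"
  assumes A: "finite A"
  shows "(\<Sum>ts\<in>{ts. length ts = k \<and> set ts \<subseteq> A}. \<Prod>i<k. g i (ts ! i)) = (\<Prod>i<k. \<Sum>t\<in>A. g i t)"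
proof (induction k arbitrary: g)
  case 0
  have "{ts. length ts = 0 \<and> set ts \<subseteq> A} = {[]}" by auto
  then show ?case by simp
next
  case (Suc k)
  have inj: "inj_on (\<lambda>(t, ts). t # ts) (A \<times> {ts. length ts = k \<and> set ts \<subseteq> A})"
    by (auto simp: inj_on_def)
  have "(\<Sum>ts\<in>{ts. length ts = Suc k \<and> set ts \<subseteq> A}. \<Prod>i<Suc k. g i (ts ! i))
      = (\<Sum>p\<in>A \<times> {ts. length ts = k \<and> set ts \<subseteq> A}. \<Prod>i<Suc k. g i ((fst p # snd p) ! i))"
    unfolding tuples_Suc by (subst sum.reindex[OF inj]) (simp add: case_prod_beta)
  also have "\<dots> = (\<Sum>p\<in>A \<times> {ts. length ts = k \<and> set ts \<subseteq> A}. g 0 (fst p) * (\<Prod>i<k. g (Suc i) (snd p ! i)))"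
    by (simp only: prod.lessThan_Suc_shift nth_Cons_0 nth_Cons_Suc)
  also have "\<dots> = (\<Sum>t\<in>A. \<Sum>ts\<in>{ts. length ts = k \<and> set ts \<subseteq> A}. g 0 t * (\<Prod>i<k. g (Suc i) (ts ! i)))"
    by (simp add: sum.cartesian_product case_prod_beta)
  also have "\<dots> = (\<Sum>t\<in>A. g 0 t) * (\<Sum>ts\<in>{ts. length ts = k \<and> set ts \<subseteq> A}. \<Prod>i<k. g (Suc i) (ts ! i))"
    by (simp add: sum_product)
  also have "\<dots> = (\<Sum>t\<in>A. g 0 t) * (\<Prod>i<k. \<Sum>t\<in>A. g (Suc i) t)"
    using Suc.IH[of "\<lambda>i. g (Suc i)"] by simp
  also have "\<dots> = (\<Prod>i<Suc k. \<Sum>t\<in>A. g i t)" by (simp only: prod.lessThan_Suc_shift)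
  finally show ?case .
qed

lemma max_ind:
  assumes k: "k \<ge> 1"
  shows "(MAX i\<in>{..<k}. X_ind e (ts ! i)) = 1 - (\<Prod>i<k. 1 - X_ind e (ts ! i))"
proof (cases "\<exists>i<k. e \<in> ts ! i")
  case True
  then obtain i where i: "i < k" "e \<in> ts ! i" by blast
  have "(\<Prod>i<k. 1 - X_ind e (ts ! i)) = 0"
    using i by (auto simp: X_ind_def intro!: bexI[of _ i])
  moreover have "(MAX i\<in>{..<k}. X_ind e (ts ! i)) = 1"
  proof (subst Max_eq_iff)
    show "finite ((\<lambda>i. X_ind e (ts ! i)) ` {..<k})" by simp
    have "0 \<in> {..<k}" using k by simp
    then show "(\<lambda>i. X_ind e (ts ! i)) ` {..<k} \<noteq> {}" by blast
    show "1 \<in> (\<lambda>i. X_ind e (ts ! i)) ` {..<k} \<and> (\<forall>a\<in>(\<lambda>i. X_ind e (ts ! i)) ` {..<k}. a \<le> 1)"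
      using i by (auto simp: X_ind_def image_iff intro!: bexI[of _ i])
  qed
  ultimately show ?thesis by simp
next
  case False
  then have z: "\<And>i. i < k \<Longrightarrow> X_ind e (ts ! i) = 0" by (auto simp: X_ind_def)
  have "(\<Prod>i<k. 1 - X_ind e (ts ! i)) = 1" using z by simp
  moreover have "(\<lambda>i. X_ind e (ts ! i)) ` {..<k} = {0}"
  proof -
    have "(\<lambda>i. X_ind e (ts ! i)) ` {..<k} = (\<lambda>i. 0) ` {..<k}" by (rule image_cong) (simp_all add: z)
    moreover have "0 \<in> {..<k}" using k by simp
    then have "(\<lambda>i. 0::real) ` {..<k} = {0}" by blast
    ultimately show ?thesis by simp
  qed
  ultimately show ?thesis by simp
qed

lemma prod_if_one:
  fixes B :: "nat \<Rightarrow> real"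
  assumes "i < k"
  shows "(\<Prod>l<k. if l = i then A else B l) = A * (\<Prod>l\<in>{..<k}-{i}. B l)"
proof -
  have "(\<Prod>l<k. if l = i then A else B l) = (if i = i then A else B i) * (\<Prod>l\<in>{..<k}-{i}. if l = i then A else B l)"
    using assms by (subst prod.remove[of _ i]) auto
  also have "(\<Prod>l\<in>{..<k}-{i}. if l = i then A else B l) = (\<Prod>l\<in>{..<k}-{i}. B l)"
    by (intro prod.cong) auto
  finally show ?thesis by simp
qed

lemma prod_if_const:
  fixes A B :: real and i k :: nat
  assumes "i < k"
  shows "(\<Prod>l<k. if l = i then A else B) = A * B ^ (k - 1)"
  using prod_if_one[OF assms, where A=A and B="\<lambda>_. B"] assms by (simp add: card_Diff_singleton)

lemma prod_if_two:
  fixes p q :: real and i j k :: nat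
  assumes "i < k" "j < k"
  shows "(\<Prod>l<k. if l = i then (if l = j then q else p) else if l = j then p else 1) = (if i = j then q else p * p)"
proof -
  have "(\<Prod>l<k. if l = i then (if l = j then q else p) else if l = j then p else 1)
      = (\<Prod>l<k. if l = i then (if i = j then q else p) else if l = j then p else 1)"
    by (intro prod.cong) auto
  also have "\<dots> = (if i = j then q else p) * (\<Prod>l\<in>{..<k}-{i}. if l = j then p else 1)"
    using prod_if_one[OF assms(1), where A="if i = j then q else p" and B="\<lambda>l. if l = j then p else 1"] by simp
  also have "(\<Prod>l\<in>{..<k}-{i}. if l = j then p else (1::real)) = (if j \<in> {..<k}-{i} then p else 1)"
    by (rule prod.delta) simp
  finally show ?thesis using assms by auto
qed


lemma cov_tuples:
  fixes \<Omega> :: "'a set" and X Y :: "'a \<Rightarrow> real" and k :: nat and p q :: real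
  assumes fin: "finite \<Omega>" and ne: "\<Omega> \<noteq> {}" and k: "k \<ge> 1"
    and sX: "(\<Sum>t\<in>\<Omega>. X t) = p * card \<Omega>" and sY: "(\<Sum>t\<in>\<Omega>. Y t) = p * card \<Omega>"
    and sXY: "(\<Sum>t\<in>\<Omega>. X t * Y t) = q * card \<Omega>"
  defines "Tu \<equiv> {ts. length ts = k \<and> set ts \<subseteq> \<Omega>}"
  defines "E \<equiv> (\<lambda>f. (\<Sum>ts\<in>Tu. f ts) / real (card Tu))"
  defines "RX \<equiv> (\<lambda>ts. (\<Sum>i<k. X (ts ! i)) - 1 + (\<Prod>i<k. 1 - X (ts ! i)))"
  defines "RY \<equiv> (\<lambda>ts. (\<Sum>i<k. Y (ts ! i)) - 1 + (\<Prod>i<k. 1 - Y (ts ! i)))"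
  shows "E (\<lambda>ts. RX ts * RY ts) - E RX * E RY =
     k * (q - p^2) + 2 * k * (1 - p) ^ (k - 1) * (p^2 - q) + (1 - 2 * p + q) ^ k - (1 - p) ^ (2 * k)"
proof -
  define N where "N = real (card \<Omega>)"
  have N0: "N > 0" using fin ne unfolding N_def by (simp add: card_gt_0_iff)
  define \<mu> where "\<mu> h = (\<Sum>t\<in>\<Omega>. h t) / N" for h :: "'a \<Rightarrow> real"
  have cardTu: "real (card Tu) = N ^ k"
  proof -
    have "Tu = {xs. set xs \<subseteq> \<Omega> \<and> length xs = k}" unfolding Tu_def by auto
    then show ?thesis using card_lists_length_eq[OF fin, of k] unfolding N_def by simp
  qed
  have EPr: "E (\<lambda>ts. \<Prod>i<k. g i (ts ! i)) = (\<Prod>i<k. \<mu> (g i))" for g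
  proof -
    have "E (\<lambda>ts. \<Prod>i<k. g i (ts ! i)) = (\<Sum>ts\<in>Tu. \<Prod>i<k. g i (ts ! i)) / N ^ k"
      unfolding E_def cardTu ..
    also have "(\<Sum>ts\<in>Tu. \<Prod>i<k. g i (ts ! i)) = (\<Prod>i<k. \<Sum>t\<in>\<Omega>. g i t)"
      unfolding Tu_def by (rule sum_prod_tuples[OF fin])
    also have "(\<Prod>i<k. \<Sum>t\<in>\<Omega>. g i t) / N ^ k = (\<Prod>i<k. (\<Sum>t\<in>\<Omega>. g i t) / N)"
      by (simp add: prod_dividef)
    finally show ?thesis unfolding \<mu>_def .
  qed
  have Eadd: "E (\<lambda>ts. a ts + b ts) = E a + E b" for a b
    unfolding E_def by (simp add: sum.distrib add_divide_distrib)
  have Esub: "E (\<lambda>ts. a ts - b ts) = E a - E b" for a b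
    unfolding E_def by (simp add: sum_subtractf diff_divide_distrib)
  have Esum: "E (\<lambda>ts. \<Sum>i<k. a i ts) = (\<Sum>i<k. E (a i))" for a :: "nat \<Rightarrow> _"
    unfolding E_def by (simp add: sum.swap[of _ Tu] sum_divide_distrib)
  have Econst: "E (\<lambda>ts. c) = c" for c
    unfolding E_def using cardTu N0 by simp
  have \<mu>X: "\<mu> X = p" and \<mu>Y: "\<mu> Y = p" and \<mu>XY: "\<mu> (\<lambda>t. X t * Y t) = q"
    using sX sY sXY N0 unfolding \<mu>_def N_def by auto
  have \<mu>1: "\<mu> (\<lambda>t. 1) = 1" using N0 unfolding \<mu>_def N_def by simp
  have \<mu>sub: "\<mu> (\<lambda>t. a t - b t) = \<mu> a - \<mu> b" for a b
    unfolding \<mu>_def by (simp add: sum_subtractf diff_divide_distrib)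
  have \<mu>1X: "\<mu> (\<lambda>t. 1 - X t) = 1 - p" using \<mu>sub[of "\<lambda>t. 1" X] \<mu>1 \<mu>X by simp
  have \<mu>1Y: "\<mu> (\<lambda>t. 1 - Y t) = 1 - p" using \<mu>sub[of "\<lambda>t. 1" Y] \<mu>1 \<mu>Y by simp
  have \<mu>X1Y: "\<mu> (\<lambda>t. X t * (1 - Y t)) = p - q"
    using \<mu>sub[of X "\<lambda>t. X t * Y t"] \<mu>X \<mu>XY by (simp add: algebra_simps)
  have \<mu>1XY: "\<mu> (\<lambda>t. (1 - X t) * Y t) = p - q"
    using \<mu>sub[of Y "\<lambda>t. X t * Y t"] \<mu>Y \<mu>XY by (simp add: algebra_simps)
  have \<mu>1X1Y: "\<mu> (\<lambda>t. (1 - X t) * (1 - Y t)) = 1 - 2 * p + q"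
  proof -
    have "(\<lambda>t. (1 - X t) * (1 - Y t)) = (\<lambda>t. (1 - X t) - (1 - X t) * Y t)" by (simp add: algebra_simps)
    then show ?thesis using \<mu>sub[of "\<lambda>t. 1 - X t" "\<lambda>t. (1 - X t) * Y t"] \<mu>1X \<mu>1XY by simp
  qed
  have EXY: "E (\<lambda>ts. X (ts ! i) * Y (ts ! j)) = (if i = j then q else p * p)" if ij: "i < k" "j < k" for i j
  proof -
    have eq: "(\<lambda>ts. X (ts ! i) * Y (ts ! j)) = (\<lambda>ts. \<Prod>l<k. (if l = i then X (ts ! l) else 1) * (if l = j then Y (ts ! l) else 1))"
      using ij by (simp add: prod.distrib prod.delta)
    have "E (\<lambda>ts. X (ts ! i) * Y (ts ! j)) = (\<Prod>l<k. \<mu> (\<lambda>t. (if l = i then X t else 1) * (if l = j then Y t else 1)))"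
      unfolding eq by (rule EPr[of "\<lambda>l t. (if l = i then X t else 1) * (if l = j then Y t else 1)"])
    also have "\<dots> = (\<Prod>l<k. if l = i then (if l = j then q else p) else if l = j then p else 1)"
      by (intro prod.cong) (auto simp: \<mu>X \<mu>Y \<mu>XY \<mu>1)
    finally show ?thesis using prod_if_two[OF ij] by simp
  qed
  have EX: "E (\<lambda>ts. X (ts ! i)) = p" if i: "i < k" for i
  proof -
    have eq: "(\<lambda>ts. X (ts ! i)) = (\<lambda>ts. \<Prod>l<k. if l = i then X (ts ! l) else 1)"
      using i by (simp add: prod.delta)
    have "E (\<lambda>ts. X (ts ! i)) = (\<Prod>l<k. \<mu> (\<lambda>t. if l = i then X t else 1))"
      unfolding eq by (rule EPr[of "\<lambda>l t. if l = i then X t else 1"])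
    also have "\<dots> = (\<Prod>l<k. if l = i then p else 1)"
      by (intro prod.cong) (auto simp: \<mu>X \<mu>1)
    finally show ?thesis using prod_if_const[OF i, of p 1] by simp
  qed
  have EY: "E (\<lambda>ts. Y (ts ! i)) = p" if i: "i < k" for i
  proof -
    have eq: "(\<lambda>ts. Y (ts ! i)) = (\<lambda>ts. \<Prod>l<k. if l = i then Y (ts ! l) else 1)"
      using i by (simp add: prod.delta)
    have "E (\<lambda>ts. Y (ts ! i)) = (\<Prod>l<k. \<mu> (\<lambda>t. if l = i then Y t else 1))"
      unfolding eq by (rule EPr[of "\<lambda>l t. if l = i then Y t else 1"])
    also have "\<dots> = (\<Prod>l<k. if l = i then p else 1)"
      by (intro prod.cong) (auto simp: \<mu>Y \<mu>1)
    finally show ?thesis using prod_if_const[OF i, of p 1] by simp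
  qed
  have EXP: "E (\<lambda>ts. X (ts ! i) * (\<Prod>l<k. 1 - Y (ts ! l))) = (p - q) * (1 - p) ^ (k - 1)" if i: "i < k" for i
  proof -
    have eq: "(\<lambda>ts. X (ts ! i) * (\<Prod>l<k. 1 - Y (ts ! l))) = (\<lambda>ts. \<Prod>l<k. (if l = i then X (ts ! l) else 1) * (1 - Y (ts ! l)))"
      using i by (simp add: prod.distrib prod.delta)
    have "E (\<lambda>ts. X (ts ! i) * (\<Prod>l<k. 1 - Y (ts ! l))) = (\<Prod>l<k. \<mu> (\<lambda>t. (if l = i then X t else 1) * (1 - Y t)))"
      unfolding eq by (rule EPr[of "\<lambda>l t. (if l = i then X t else 1) * (1 - Y t)"])
    also have "\<dots> = (\<Prod>l<k. if l = i then p - q else 1 - p)"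
      by (intro prod.cong) (auto simp: \<mu>X1Y \<mu>1Y)
    finally show ?thesis using prod_if_const[OF i, of "p - q" "1 - p"] by simp
  qed
  have EPY: "E (\<lambda>ts. (\<Prod>l<k. 1 - X (ts ! l)) * Y (ts ! i)) = (p - q) * (1 - p) ^ (k - 1)" if i: "i < k" for i
  proof -
    have eq: "(\<lambda>ts. (\<Prod>l<k. 1 - X (ts ! l)) * Y (ts ! i)) = (\<lambda>ts. \<Prod>l<k. (1 - X (ts ! l)) * (if l = i then Y (ts ! l) else 1))"
      using i by (simp add: prod.distrib prod.delta)
    have "E (\<lambda>ts. (\<Prod>l<k. 1 - X (ts ! l)) * Y (ts ! i)) = (\<Prod>l<k. \<mu> (\<lambda>t. (1 - X t) * (if l = i then Y t else 1)))"
      unfolding eq by (rule EPr[of "\<lambda>l t. (1 - X t) * (if l = i then Y t else 1)"])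
    also have "\<dots> = (\<Prod>l<k. if l = i then p - q else 1 - p)"
      by (intro prod.cong) (auto simp: \<mu>1XY \<mu>1X)
    finally show ?thesis using prod_if_const[OF i, of "p - q" "1 - p"] by simp
  qed
  have EPX: "E (\<lambda>ts. \<Prod>l<k. 1 - X (ts ! l)) = (1 - p) ^ k"
    using EPr[of "\<lambda>l t. 1 - X t"] \<mu>1X by simp
  have EPY': "E (\<lambda>ts. \<Prod>l<k. 1 - Y (ts ! l)) = (1 - p) ^ k"
    using EPr[of "\<lambda>l t. 1 - Y t"] \<mu>1Y by simp
  have EPP: "E (\<lambda>ts. (\<Prod>l<k. 1 - X (ts ! l)) * (\<Prod>l<k. 1 - Y (ts ! l))) = (1 - 2 * p + q) ^ k"
    using EPr[of "\<lambda>l t. (1 - X t) * (1 - Y t)"] \<mu>1X1Y by (simp add: prod.distrib)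
  define S where "S ts = (\<Sum>i<k. X (ts ! i))" for ts
  define S' where "S' ts = (\<Sum>i<k. Y (ts ! i))" for ts
  define P where "P ts = (\<Prod>i<k. 1 - X (ts ! i))" for ts
  define P' where "P' ts = (\<Prod>i<k. 1 - Y (ts ! i))" for ts
  have ES: "E S = k * p" unfolding S_def Esum using EX by simp
  have ES': "E S' = k * p" unfolding S'_def Esum using EY by simp
  have ESS: "E (\<lambda>ts. S ts * S' ts) = k * (q + (k - 1) * p * p)"
  proof -
    have "E (\<lambda>ts. S ts * S' ts) = (\<Sum>i<k. \<Sum>j<k. E (\<lambda>ts. X (ts ! i) * Y (ts ! j)))"
      unfolding S_def S'_def sum_product Esum ..
    also have "\<dots> = (\<Sum>i<k. \<Sum>j<k. p * p + (if i = j then q - p * p else 0))"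
      using EXY by (intro sum.cong) auto
    also have "\<dots> = (\<Sum>i<k. k * (p * p) + (q - p * p))"
      by (simp add: sum.distrib)
    also have "\<dots> = k * (q + (k - 1) * p * p)" using k by (simp add: algebra_simps of_nat_diff)
    finally show ?thesis .
  qed
  have ESP: "E (\<lambda>ts. S ts * P' ts) = k * ((p - q) * (1 - p) ^ (k - 1))"
  proof -
    have "E (\<lambda>ts. S ts * P' ts) = (\<Sum>i<k. E (\<lambda>ts. X (ts ! i) * (\<Prod>l<k. 1 - Y (ts ! l))))"
      unfolding S_def P'_def sum_distrib_right Esum ..
    also have "\<dots> = (\<Sum>i<k. (p - q) * (1 - p) ^ (k - 1))" using EXP by simp
    finally show ?thesis by simp
  qed
  have EPS: "E (\<lambda>ts. P ts * S' ts) = k * ((p - q) * (1 - p) ^ (k - 1))"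
  proof -
    have "E (\<lambda>ts. P ts * S' ts) = (\<Sum>i<k. E (\<lambda>ts. (\<Prod>l<k. 1 - X (ts ! l)) * Y (ts ! i)))"
      unfolding S'_def P_def sum_distrib_left Esum ..
    also have "\<dots> = (\<Sum>i<k. (p - q) * (1 - p) ^ (k - 1))" using EPY by simp
    finally show ?thesis by simp
  qed
  have RXe: "RX = (\<lambda>ts. S ts - 1 + P ts)" unfolding RX_def S_def P_def ..
  have RYe: "RY = (\<lambda>ts. S' ts - 1 + P' ts)" unfolding RY_def S'_def P'_def ..
  have prodexp: "(\<lambda>ts. RX ts * RY ts) = (\<lambda>ts. S ts * S' ts - S ts + S ts * P' ts - S' ts + 1 - P' ts + P ts * S' ts - P ts + P ts * P' ts)"
    unfolding RXe RYe by (simp add: algebra_simps)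
  have ERR: "E (\<lambda>ts. RX ts * RY ts) = E (\<lambda>ts. S ts * S' ts) - E S + E (\<lambda>ts. S ts * P' ts) - E S' + 1 - E P'
       + E (\<lambda>ts. P ts * S' ts) - E P + E (\<lambda>ts. P ts * P' ts)"
    unfolding prodexp by (simp only: Eadd Esub Econst)
  have ER: "E RX = E S - 1 + E P" unfolding RXe by (simp only: Eadd Esub Econst)
  have ER': "E RY = E S' - 1 + E P'" unfolding RYe by (simp only: Eadd Esub Econst)
  have EP: "E P = (1 - p) ^ k" using EPX unfolding P_def .
  have EP': "E P' = (1 - p) ^ k" using EPY' unfolding P'_def .
  have EPP': "E (\<lambda>ts. P ts * P' ts) = (1 - 2 * p + q) ^ k" using EPP unfolding P_def P'_def .
  define u where "u = (1 - p) ^ (k - 1)"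
  define w where "w = (1 - 2 * p + q) ^ k"
  have pk: "(1 - p) ^ k = (1 - p) * u" unfolding u_def using k
    by (metis Suc_diff_1 less_le_trans zero_less_one power_Suc)
  have p2k: "(1 - p) ^ (2 * k) = ((1 - p) * u) ^ 2" using pk by (metis power_mult mult.commute)
  have km: "real (k - 1) = real k - 1" using k by (simp add: of_nat_diff)
  show ?thesis
    unfolding ERR ER ER' ES ES' ESS ESP EPS EP EP' EPP' p2k pk km
    unfolding u_def[symmetric] w_def[symmetric]
    by (simp add: algebra_simps power2_eq_square)
qed


lemma sum_ind:
  assumes fin: "finite A"
  shows "(\<Sum>T\<in>A. X_ind e T) = real (card {T\<in>A. e \<in> T})"
    and "(\<Sum>T\<in>A. X_ind e T * X_ind e' T) = real (card {T\<in>A. e \<in> T \<and> e' \<in> T})"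
proof -
  have "(\<Sum>T\<in>A. X_ind e T) = (\<Sum>T\<in>A. if e \<in> T then 1 else 0)" unfolding X_ind_def ..
  also have "\<dots> = (\<Sum>T\<in>{T\<in>A. e \<in> T}. 1)" using sum.inter_filter[OF fin, of "\<lambda>_. 1::real" "\<lambda>T. e \<in> T"] by simp
  finally show "(\<Sum>T\<in>A. X_ind e T) = real (card {T\<in>A. e \<in> T})" by simp
  have "(\<Sum>T\<in>A. X_ind e T * X_ind e' T) = (\<Sum>T\<in>A. if e \<in> T \<and> e' \<in> T then 1 else 0)"
    unfolding X_ind_def by (intro sum.cong) auto
  also have "\<dots> = (\<Sum>T\<in>{T\<in>A. e \<in> T \<and> e' \<in> T}. 1)"
    using sum.inter_filter[OF fin, of "\<lambda>_. 1::real" "\<lambda>T. e \<in> T \<and> e' \<in> T"] by simp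
  finally show "(\<Sum>T\<in>A. X_ind e T * X_ind e' T) = real (card {T\<in>A. e \<in> T \<and> e' \<in> T})" by simp
qed

lemma cov_main:
  fixes n k :: nat and e e' :: "nat set" and p q :: real
  assumes n: "n \<ge> 1" and k: "k \<ge> 1"
    and cX: "real (card {T\<in>spanning_trees n. e \<in> T}) = p * card (spanning_trees n)"
    and cY: "real (card {T\<in>spanning_trees n. e' \<in> T}) = p * card (spanning_trees n)"
    and cXY: "real (card {T\<in>spanning_trees n. e \<in> T \<and> e' \<in> T}) = q * card (spanning_trees n)"
  shows "covariance_pmf (tree_tuple_pmf n k) (R_rep k e) (R_rep k e') =
     k * (q - p^2) + 2 * k * (1 - p) ^ (k - 1) * (p^2 - q) + (1 - 2 * p + q) ^ k - (1 - p) ^ (2 * k)"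
proof -
  define \<Omega> where "\<Omega> = spanning_trees n"
  have "card \<Omega> * n = n ^ (n - 1)" using card_ST[OF n] unfolding \<Omega>_def .
  moreover have "n ^ (n - 1) > 0" using n by simp
  ultimately have "card \<Omega> > 0" by (metis mult_is_0 not_gr0)
  then have fin: "finite \<Omega>" and ne: "\<Omega> \<noteq> {}" by (auto simp: card_gt_0_iff)
  define Tu where "Tu = {ts. length ts = k \<and> set ts \<subseteq> \<Omega>}"
  have Tu: "tree_tuples n k = Tu" unfolding tree_tuples_def Tu_def \<Omega>_def ..
  have finTu: "finite Tu" unfolding Tu_def using finite_lists_length_eq[OF fin, of k]
    by (metis (no_types, lifting) Collect_cong)
  obtain T0 where "T0 \<in> \<Omega>" using ne by blast
  then have "replicate k T0 \<in> Tu" unfolding Tu_def by auto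
  then have neTu: "Tu \<noteq> {}" by blast
  define E where "E f = (\<Sum>ts\<in>Tu. f ts) / real (card Tu)" for f :: "nat set set list \<Rightarrow> real"
  have Eexp: "measure_pmf.expectation (tree_tuple_pmf n k) f = E f" for f
    unfolding tree_tuple_pmf_def Tu E_def using integral_pmf_of_set[OF neTu finTu] by simp
  have RR: "R_rep k e' = (\<lambda>ts. (\<Sum>i<k. X_ind e' (ts ! i)) - 1 + (\<Prod>i<k. 1 - X_ind e' (ts ! i)))"
    for e' unfolding R_rep_def max_ind[OF k] by (simp add: fun_eq_iff)
  have main: "E (\<lambda>ts. R_rep k e ts * R_rep k e' ts) - E (R_rep k e) * E (R_rep k e') =
     k * (q - p^2) + 2 * k * (1 - p) ^ (k - 1) * (p^2 - q) + (1 - 2 * p + q) ^ k - (1 - p) ^ (2 * k)"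
    unfolding RR E_def Tu_def
  proof (rule cov_tuples[OF fin ne k])
    show "(\<Sum>t\<in>\<Omega>. X_ind e t) = p * real (card \<Omega>)" using sum_ind(1)[OF fin] cX unfolding \<Omega>_def by simp
    show "(\<Sum>t\<in>\<Omega>. X_ind e' t) = p * real (card \<Omega>)" using sum_ind(1)[OF fin] cY unfolding \<Omega>_def by simp
    show "(\<Sum>t\<in>\<Omega>. X_ind e t * X_ind e' t) = q * real (card \<Omega>)"
      using sum_ind(2)[OF fin] cXY unfolding \<Omega>_def by simp
  qed
  show ?thesis unfolding covariance_pmf_def Eexp using main .
qed


lemma Kn_edgesE:
  assumes "e \<in> Kn_edges n"
  obtains a b where "e = {a, b}" "a \<in> {1..n}" "b \<in> {1..n}" "a \<noteq> b"
  using assms unfolding Kn_edges_def by blast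

theorem mainTheorem10:
  fixes n k :: nat and e e' :: "nat set"
  assumes "n \<ge> 3" and "k \<ge> 1"
    and "e \<in> Kn_edges n" and "e' \<in> Kn_edges n" and "e \<noteq> e'"
  shows "(e \<inter> e' = {} \<longrightarrow>
            covariance_pmf (tree_tuple_pmf n k) (R_rep k e) (R_rep k e') = 0)
       \<and> (e \<inter> e' \<noteq> {} \<longrightarrow>
            covariance_pmf (tree_tuple_pmf n k) (R_rep k e) (R_rep k e') =
              - real k / real n ^ 2
              + 2 * real k / real n ^ 2 * (1 - 2 / real n) ^ (k - 1)
              + (1 - 4 / real n + 3 / real n ^ 2) ^ k
              - (1 - 2 / real n) ^ (2 * k))"
proof -
  note n3 = assms(1) and k = assms(2)
  have n1: "n \<ge> 1" using n3 by simp
  have npos: "real n > 0" using n3 by simp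
  define N where "N = card (spanning_trees n)"
  have Nn: "N * n = n ^ (n - 1)" using card_ST[OF n1] unfolding N_def .
  have "n ^ (n - 1) = n ^ (n - 2) * n"
  proof -
    have "n - 1 = Suc (n - 2)" using n3 by simp
    then show ?thesis by (simp only: power_Suc2)
  qed
  then have N2: "N = n ^ (n - 2)" using Nn n3 by simp
  have "n ^ (n - 2) = n ^ (n - 3) * n"
  proof -
    have "n - 2 = Suc (n - 3)" using n3 by simp
    then show ?thesis by (simp only: power_Suc2)
  qed
  then have N3: "N = n ^ (n - 3) * n" using N2 by simp
  have pval: "real (card {T\<in>spanning_trees n. f \<in> T}) = 2 / real n * real N" if f: "f \<in> Kn_edges n" for f
  proof -
    obtain a b where ab: "f = {a, b}" "a \<in> {1..n}" "b \<in> {1..n}" "a \<noteq> b" using Kn_edgesE[OF f] .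
    have "card {T\<in>spanning_trees n. f \<in> T} * n = 2 * N" using card_one_edge[OF ab(2-4)] ab(1) N2 by simp
    then have "real (card {T\<in>spanning_trees n. f \<in> T}) * real n = 2 * real N" by (metis of_nat_mult of_nat_numeral)
    then show ?thesis using npos by (simp add: field_simps)
  qed
  obtain a b where ab: "e = {a, b}" "a \<in> {1..n}" "b \<in> {1..n}" "a \<noteq> b" using Kn_edgesE[OF assms(3)] .
  obtain c d where cd: "e' = {c, d}" "c \<in> {1..n}" "d \<in> {1..n}" "c \<noteq> d" using Kn_edgesE[OF assms(4)] .
  have cm: "covariance_pmf (tree_tuple_pmf n k) (R_rep k e) (R_rep k e') =
     k * (q - (2 / real n)^2) + 2 * k * (1 - 2 / real n) ^ (k - 1) * ((2 / real n)^2 - q)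
     + (1 - 2 * (2 / real n) + q) ^ k - (1 - 2 / real n) ^ (2 * k)"
    if q: "real (card {T\<in>spanning_trees n. e \<in> T \<and> e' \<in> T}) = q * real N" for q :: real
    using cov_main[OF n1 k pval[OF assms(3), unfolded N_def] pval[OF assms(4), unfolded N_def] q[unfolded N_def]] by simp
  show ?thesis
  proof (intro conjI impI)
    assume disj: "e \<inter> e' = {}"
    have ae: "a \<in> e" "b \<in> e" using ab(1) by auto
    have ce: "c \<in> e'" "d \<in> e'" using cd(1) by auto
    have dist: "a \<noteq> c" "a \<noteq> d" "b \<noteq> c" "b \<noteq> d"
      using disj ae ce by (metis disjoint_iff)+
    have "card {T\<in>spanning_trees n. e \<in> T \<and> e' \<in> T} * n = 4 * n ^ (n - 3)"
      using card_disj_edges[OF ab(2,3) cd(2,3) ab(4) dist(1,2,3,4) cd(4)] ab(1) cd(1) by simp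
    then have "card {T\<in>spanning_trees n. e \<in> T \<and> e' \<in> T} * n * n = 4 * N" using N3 by simp
    then have "real (card {T\<in>spanning_trees n. e \<in> T \<and> e' \<in> T}) * real n * real n = 4 * real N"
      by (metis of_nat_mult of_nat_numeral)
    then have "real (card {T\<in>spanning_trees n. e \<in> T \<and> e' \<in> T}) = (2 / real n)^2 * real N"
      using npos by (simp add: field_simps power2_eq_square)
    from cm[OF this] show "covariance_pmf (tree_tuple_pmf n k) (R_rep k e) (R_rep k e') = 0"
    proof -
      assume h: "covariance_pmf (tree_tuple_pmf n k) (R_rep k e) (R_rep k e') =
        k * ((2 / real n)^2 - (2 / real n)^2) + 2 * k * (1 - 2 / real n) ^ (k - 1) * ((2 / real n)^2 - (2 / real n)^2)
        + (1 - 2 * (2 / real n) + (2 / real n)^2) ^ k - (1 - 2 / real n) ^ (2 * k)"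
      have "1 - 2 * (2 / real n) + (2 / real n)^2 = (1 - 2 / real n)^2" by (simp add: power2_eq_square algebra_simps)
      then show ?thesis using h by (simp add: power_mult)
    qed
  next
    assume inter: "e \<inter> e' \<noteq> {}"
    obtain x where x: "x \<in> e" "x \<in> e'" using inter by blast
    have other: "\<exists>y. E = {x, y} \<and> x \<noteq> y \<and> y \<in> {1..n}"
      if E: "E = {u, v}" "u \<in> {1..n}" "v \<in> {1..n}" "u \<noteq> v" "x \<in> E" for E u v
    proof (cases "x = u")
      case True
      then show ?thesis using E by blast
    next
      case False
      then have "x = v" using E by blast
      then have "E = {x, u} \<and> x \<noteq> u \<and> u \<in> {1..n}" using E by (simp add: insert_commute)
      then show ?thesis by blast
    qed
    obtain y where y: "e = {x, y}" "x \<noteq> y" "y \<in> {1..n}" using other[OF ab x(1)] by blast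
    obtain z where z: "e' = {x, z}" "x \<noteq> z" "z \<in> {1..n}" using other[OF cd x(2)] by blast
    have yz: "y \<noteq> z"
    proof
      assume "y = z"
      then have "e = e'" using y(1) z(1) by simp
      then show False using assms(5) by simp
    qed
    have xV: "x \<in> {1..n}" using x(1) ab(1-3) by blast
    have "card {T\<in>spanning_trees n. e \<in> T \<and> e' \<in> T} * n = 3 * n ^ (n - 3)"
      using card_adj_edges[OF xV y(3) z(3) y(2) z(2) yz] y(1) z(1) by simp
    then have "card {T\<in>spanning_trees n. e \<in> T \<and> e' \<in> T} * n * n = 3 * N" using N3 by simp
    then have "real (card {T\<in>spanning_trees n. e \<in> T \<and> e' \<in> T}) * real n * real n = 3 * real N"
      by (metis of_nat_mult of_nat_numeral)
    then have "real (card {T\<in>spanning_trees n. e \<in> T \<and> e' \<in> T}) = 3 / real n ^ 2 * real N"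
      using npos by (simp add: field_simps power2_eq_square)
    note h = cm[OF this]
    have e1: "3 / real n ^ 2 - (2 / real n)^2 = - 1 / real n ^ 2" using npos by (simp add: field_simps power2_eq_square)
    have e2: "(2 / real n)^2 - 3 / real n ^ 2 = 1 / real n ^ 2" using npos by (simp add: field_simps power2_eq_square)
    have e3: "1 - 2 * (2 / real n) + 3 / real n ^ 2 = 1 - 4 / real n + 3 / real n ^ 2" by simp
    show "covariance_pmf (tree_tuple_pmf n k) (R_rep k e) (R_rep k e') =
              - real k / real n ^ 2
              + 2 * real k / real n ^ 2 * (1 - 2 / real n) ^ (k - 1)
              + (1 - 4 / real n + 3 / real n ^ 2) ^ k
              - (1 - 2 / real n) ^ (2 * k)"
      unfolding h e1 e2 e3 by simp
  qed
qed


end
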